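(* Let $G=[G^{(1)},\dots,G^{(p)}]\in\mathbb{R}^{n\times m}$ with $G^{(i)}\in\mathbb{R}^{n\times k_i}$ and $G^\top G=nI_m$, let $\sigma^2>0$ and $\gamma>0$, and consider the model: $\lambda_1,\dots,\lambda_p$ i.i.d. with density $p_\gamma(t)=\gamma e^{-\gamma t}$ on $t\ge0$; conditionally on $\lambda$, independent blocks $\theta^{(i)}\mid\lambda_i\sim\mathcal N(0,\lambda_iI_{k_i})$; $v\sim\mathcal N(0,\sigma^2I_n)$ independent; $y=\sum_iG^{(i)}\theta^{(i)}+v$. Then the estimator $$\{\hat\lambda_1(\gamma),\dots,\hat\lambda_p(\gamma)\}:=\arg\max_{\lambda\in\mathbb{R}_+^p}p(\lambda\mid y)=\arg\max_{\lambda\in\mathbb{R}_+^p}\int p(y,\theta\mid\lambda)\,p_\gamma(\lambda)\,d\theta$$ is given by $$\hat\lambda_i(\gamma)=\max\left(0,\ \frac{1}{4\gamma}\left[\sqrt{k_i^2+8\gamma\|\hat\theta_{LS}^{(i)}\|^2}-\Big(k_i+\frac{4\sigma^2\gamma}{n}\Big)\right]\right),$$ where $\hat\theta_{LS}^{(i)}=\frac1n(G^{(i)})^\top y$ is the least squares estimator of the $i$-th block. As $\gamma\to0$, $$\lim_{\gamma\to0}\hat\lambda_i(\gamma)=\max\left(0,\ \frac{\|\hat\theta_{LS}^{(i)}\|^2}{k_i}-\frac{\sigma^2}{n}\right).$$ In addition, for fixed $\bar\theta$, $$\mathbb{P}\big[\hat\lambda_i(\gamma)=0\mid\theta=\bar\theta\big]=\mathbb{P}\left[\chi^2\Big(k_i,\|\bar\theta^{(i)}\|^2\frac{n}{\sigma^2}\Big)\le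 k_i+2\gamma\frac{\sigma^2}{n}\right],$$ where $\chi^2(d,\mu)$ denotes a noncentral chi-squared random variable with $d$ degrees of freedom and noncentrality parameter $\mu$.
   Context: $\mathbb{R}_+=[0,\infty)$; $p(y,\theta\mid\lambda)$ is the joint density of $(y,\theta)$ given $\lambda$ under the stated model. Conditioning on $\theta=\bar\theta$ means $y=G\bar\theta+v$ with $v\sim\mathcal N(0,\sigma^2I_n)$. *)

theory Defs
  imports "HOL-Probability.Probability"
begin

text \<open>Block i (i < p) of the design matrix is G i :: row r (r < n) -> column j (j < k i) -> real.
  Parameters theta are indexed by pairs (i,j) with i < p, j < k i; hyperparameters lam by i < p.
  Vectors y in R^n are functions nat => real (only indices r < n matter).\<close>

definition blk_idx :: "nat \<Rightarrow> (nat \<Rightarrow> nat) \<Rightarrow> (nat \<times> nat) set" where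
  "blk_idx p k = (SIGMA i:{..<p}. {..<k i})"

definition Gtheta :: "(nat \<Rightarrow> nat \<Rightarrow> nat \<Rightarrow> real) \<Rightarrow> nat \<Rightarrow> (nat \<Rightarrow> nat) \<Rightarrow> (nat \<times> nat \<Rightarrow> real) \<Rightarrow> nat \<Rightarrow> real" where
  "Gtheta G p k th r = (\<Sum>(i,j)\<in>blk_idx p k. G i r j * th (i,j))"

definition gauss_meas :: "real \<Rightarrow> real measure" where
  "gauss_meas v = (if 0 < v then density lborel (normal_density 0 (sqrt v)) else return lborel 0)"

definition prior_theta :: "nat \<Rightarrow> (nat \<Rightarrow> nat) \<Rightarrow> (nat \<Rightarrow> real) \<Rightarrow> (nat \<times> nat \<Rightarrow> real) measure" where
  "prior_theta p k lam = PiM (blk_idx p k) (\<lambda>(i,j). gauss_meas (lam i))"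

definition lik :: "nat \<Rightarrow> (nat \<Rightarrow> nat \<Rightarrow> nat \<Rightarrow> real) \<Rightarrow> nat \<Rightarrow> (nat \<Rightarrow> nat) \<Rightarrow> real
    \<Rightarrow> (nat \<Rightarrow> real) \<Rightarrow> (nat \<times> nat \<Rightarrow> real) \<Rightarrow> real" where
  "lik n G p k sigma2 y th = (\<Prod>r<n. normal_density (Gtheta G p k th r) (sqrt sigma2) (y r))"

definition post_obj :: "nat \<Rightarrow> (nat \<Rightarrow> nat \<Rightarrow> nat \<Rightarrow> real) \<Rightarrow> nat \<Rightarrow> (nat \<Rightarrow> nat) \<Rightarrow> real \<Rightarrow> real
    \<Rightarrow> (nat \<Rightarrow> real) \<Rightarrow> (nat \<Rightarrow> real) \<Rightarrow> real" where
  "post_obj n G p k sigma2 gamma y lam =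
     (\<integral>th. lik n G p k sigma2 y th \<partial>prior_theta p k lam) * (\<Prod>i<p. exponential_density gamma (lam i))"

definition nonneg_params :: "nat \<Rightarrow> (nat \<Rightarrow> real) set" where
  "nonneg_params p = {lam. (\<forall>i<p. 0 \<le> lam i) \<and> (\<forall>i\<ge>p. lam i = 0)}"

definition argmax_post :: "nat \<Rightarrow> (nat \<Rightarrow> nat \<Rightarrow> nat \<Rightarrow> real) \<Rightarrow> nat \<Rightarrow> (nat \<Rightarrow> nat) \<Rightarrow> real \<Rightarrow> real
    \<Rightarrow> (nat \<Rightarrow> real) \<Rightarrow> (nat \<Rightarrow> real) set" where
  "argmax_post n G p k sigma2 gamma y =
     {lam \<in> nonneg_params p. \<forall>l \<in> nonneg_params p.
        post_obj n G p k sigma2 gamma y l \<le> post_obj n G p k sigma2 gamma y lam}"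

definition theta_LS :: "nat \<Rightarrow> (nat \<Rightarrow> nat \<Rightarrow> nat \<Rightarrow> real) \<Rightarrow> (nat \<Rightarrow> real) \<Rightarrow> nat \<Rightarrow> nat \<Rightarrow> real" where
  "theta_LS n G y i j = (1 / real n) * (\<Sum>r<n. G i r j * y r)"

definition normsq_LS :: "nat \<Rightarrow> (nat \<Rightarrow> nat \<Rightarrow> nat \<Rightarrow> real) \<Rightarrow> (nat \<Rightarrow> nat) \<Rightarrow> (nat \<Rightarrow> real) \<Rightarrow> nat \<Rightarrow> real" where
  "normsq_LS n G k y i = (\<Sum>j<k i. (theta_LS n G y i j)\<^sup>2)"

definition lamhat :: "nat \<Rightarrow> (nat \<Rightarrow> nat \<Rightarrow> nat \<Rightarrow> real) \<Rightarrow> nat \<Rightarrow> (nat \<Rightarrow> nat) \<Rightarrow> real \<Rightarrow> real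
    \<Rightarrow> (nat \<Rightarrow> real) \<Rightarrow> nat \<Rightarrow> real" where
  "lamhat n G p k sigma2 gamma y i =
     (if i < p then max 0 (1 / (4 * gamma) *
        (sqrt ((real (k i))\<^sup>2 + 8 * gamma * normsq_LS n G k y i)
         - (real (k i) + 4 * sigma2 * gamma / real n)))
      else 0)"

definition y_given_theta :: "nat \<Rightarrow> (nat \<Rightarrow> nat \<Rightarrow> nat \<Rightarrow> real) \<Rightarrow> nat \<Rightarrow> (nat \<Rightarrow> nat) \<Rightarrow> real
    \<Rightarrow> (nat \<times> nat \<Rightarrow> real) \<Rightarrow> (nat \<Rightarrow> real) measure" where
  "y_given_theta n G p k sigma2 thbar =
     PiM {..<n} (\<lambda>r. density lborel (normal_density (Gtheta G p k thbar r) (sqrt sigma2)))"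

text \<open>Noncentral chi-squared law chi2(d, mu): law of sum_{j<d} (Z_j + m_j)^2, Z_j i.i.d. N(0,1),
  with mean vector m = (sqrt mu, 0, ..., 0) (so that sum m_j^2 = mu).\<close>
definition nc_chi2 :: "nat \<Rightarrow> real \<Rightarrow> real measure" where
  "nc_chi2 d mu = distr (PiM {..<d} (\<lambda>_. density lborel std_normal_density)) borel
     (\<lambda>z. \<Sum>j<d. (z j + (if j = 0 then sqrt mu else 0))\<^sup>2)"

end

theory Submission
  imports Defs
begin

abbreviation stdN :: "real measure" where "stdN \<equiv> density lborel std_normal_density"

definition LI :: "'i set \<Rightarrow> ('i \<Rightarrow> real) measure" where
  "LI I = PiM I (\<lambda>_. lborel)"
definition GI :: "'i set \<Rightarrow> ('i \<Rightarrow> real) measure" where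
  "GI I = PiM I (\<lambda>_. stdN)"

lemma prob_stdN: "prob_space stdN"
  using prob_space_normal_density by simp

interpretation Lps: product_sigma_finite "\<lambda>_::'i. lborel::real measure"
  by standard

interpretation Gps: product_sigma_finite "\<lambda>_::'i. stdN"
  by (simp add: product_sigma_finite_def prob_stdN prob_space_imp_sigma_finite)

lemma sets_LI[measurable_cong]: "sets (LI I) = sets (PiM I (\<lambda>_. borel))"
  unfolding LI_def by (intro sets_PiM_cong) auto
lemma sets_GI[measurable_cong]: "sets (GI I) = sets (PiM I (\<lambda>_. borel))"
  unfolding GI_def by (intro sets_PiM_cong) auto
lemma space_LI: "space (LI I) = PiE I (\<lambda>_. UNIV)"
  unfolding LI_def by (simp add: space_PiM)
lemma space_GI: "space (GI I) = PiE I (\<lambda>_. UNIV)"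
  unfolding GI_def by (simp add: space_PiM)

lemma translate_nn:
  fixes f :: "real \<Rightarrow> ennreal" assumes [measurable]: "f \<in> borel_measurable borel"
  shows "(\<integral>\<^sup>+y. f (y + t) \<partial>lborel) = (\<integral>\<^sup>+y. f y \<partial>lborel)"
  using nn_integral_real_affine[OF assms, of 1 t] by (simp add: add.commute)

lemma neg_nn:
  fixes f :: "real \<Rightarrow> ennreal" assumes [measurable]: "f \<in> borel_measurable borel"
  shows "(\<integral>\<^sup>+y. f (- y) \<partial>lborel) = (\<integral>\<^sup>+y. f y \<partial>lborel)"
  using nn_integral_real_affine[OF assms, of "-1" 0] by simp

lemma shear_inv:
  fixes I :: "'i set" and g :: "('i \<Rightarrow> real) \<Rightarrow> ennreal"
  assumes I: "finite I" "i \<in> I" "j \<in> I" "i \<noteq> j"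
  and g[measurable]: "g \<in> borel_measurable (PiM I (\<lambda>_. borel))"
  shows "(\<integral>\<^sup>+x. g (\<lambda>k\<in>I. if k = i then x i + c * x j else x k) \<partial>LI I) = (\<integral>\<^sup>+x. g x \<partial>LI I)"
proof -
  define I' where "I' = I - {i}"
  have II: "I = insert i I'" "i \<notin> I'" "finite I'" "j \<in> I'" using I by (auto simp: I'_def)
  have gm0: "(\<lambda>x. g (\<lambda>k\<in>I. if k = i then x i + c * x j else x k)) \<in> borel_measurable (PiM I (\<lambda>_. borel))"
    using I by measurable
  have sI: "sets (PiM (insert i I') (\<lambda>_. lborel::real measure)) = sets (PiM I (\<lambda>_. borel))"
    unfolding II(1) by (intro sets_PiM_cong) auto
  have gm: "g \<in> borel_measurable (PiM (insert i I') (\<lambda>_. lborel::real measure))"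
    using sI g by (simp cong: measurable_cong_sets)
  have gm2: "(\<lambda>x. g (\<lambda>k\<in>I. if k = i then x i + c * x j else x k)) \<in> borel_measurable (PiM (insert i I') (\<lambda>_. lborel::real measure))"
    using sI gm0 by (simp cong: measurable_cong_sets)
  have "(\<integral>\<^sup>+x. g (\<lambda>k\<in>I. if k = i then x i + c * x j else x k) \<partial>LI I)
     = (\<integral>\<^sup>+ x. (\<integral>\<^sup>+ y. g (\<lambda>k\<in>I. if k = i then (x(i:=y)) i + c * (x(i:=y)) j else (x(i:=y)) k) \<partial>lborel) \<partial>(PiM I' (\<lambda>_. lborel)))"
    unfolding LI_def using Lps.product_nn_integral_insert[OF II(3,2) gm2] II(1) by simp
  also have "\<dots> = (\<integral>\<^sup>+ x. (\<integral>\<^sup>+ y. g (x(i:=y)) \<partial>lborel) \<partial>(PiM I' (\<lambda>_. lborel)))"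
  proof (rule nn_integral_cong)
    fix x assume x: "x \<in> space (PiM I' (\<lambda>_. lborel::real measure))"
    have e: "(\<lambda>k\<in>I. if k = i then (x(i:=y)) i + c * (x(i:=y)) j else (x(i:=y)) k) = x(i := y + c * x j)" for y
      using x II I by (auto simp: space_PiM PiE_def extensional_def fun_eq_iff)
    have m: "(\<lambda>y. g (x(i:=y))) \<in> borel_measurable borel"
      using measurable_comp[OF measurable_component_update[OF x II(2)] gm] by (simp add: comp_def)
    show "(\<integral>\<^sup>+ y. g (\<lambda>k\<in>I. if k = i then (x(i:=y)) i + c * (x(i:=y)) j else (x(i:=y)) k) \<partial>lborel) = (\<integral>\<^sup>+ y. g (x(i:=y)) \<partial>lborel)"
      unfolding e using translate_nn[OF m, of "c * x j"] by simp
  qed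
  also have "\<dots> = (\<integral>\<^sup>+x. g x \<partial>LI I)"
    unfolding LI_def using Lps.product_nn_integral_insert[OF II(3,2) gm] II(1) by simp
  finally show ?thesis .
qed


lemma scale_inv:
  fixes I :: "'i set" and g :: "('i \<Rightarrow> real) \<Rightarrow> ennreal"
  assumes I: "finite I" "i \<in> I" and c: "\<bar>c\<bar> = 1"
  and g[measurable]: "g \<in> borel_measurable (PiM I (\<lambda>_. borel))"
  shows "(\<integral>\<^sup>+x. g (\<lambda>k\<in>I. if k = i then c * x i else x k) \<partial>LI I) = (\<integral>\<^sup>+x. g x \<partial>LI I)"
proof -
  define I' where "I' = I - {i}"
  have II: "I = insert i I'" "i \<notin> I'" "finite I'" using I by (auto simp: I'_def)
  have gm0: "(\<lambda>x. g (\<lambda>k\<in>I. if k = i then c * x i else x k)) \<in> borel_measurable (PiM I (\<lambda>_. borel))"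
    using I by measurable
  have sI: "sets (PiM (insert i I') (\<lambda>_. lborel::real measure)) = sets (PiM I (\<lambda>_. borel))"
    unfolding II(1) by (intro sets_PiM_cong) auto
  have gm: "g \<in> borel_measurable (PiM (insert i I') (\<lambda>_. lborel::real measure))"
    using sI g by (simp cong: measurable_cong_sets)
  have gm2: "(\<lambda>x. g (\<lambda>k\<in>I. if k = i then c * x i else x k)) \<in> borel_measurable (PiM (insert i I') (\<lambda>_. lborel::real measure))"
    using sI gm0 by (simp cong: measurable_cong_sets)
  have "(\<integral>\<^sup>+x. g (\<lambda>k\<in>I. if k = i then c * x i else x k) \<partial>LI I)
     = (\<integral>\<^sup>+ x. (\<integral>\<^sup>+ y. g (\<lambda>k\<in>I. if k = i then c * (x(i:=y)) i else (x(i:=y)) k) \<partial>lborel) \<partial>(PiM I' (\<lambda>_. lborel)))"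
    unfolding LI_def using Lps.product_nn_integral_insert[OF II(3,2) gm2] II(1) by simp
  also have "\<dots> = (\<integral>\<^sup>+ x. (\<integral>\<^sup>+ y. g (x(i:=y)) \<partial>lborel) \<partial>(PiM I' (\<lambda>_. lborel)))"
  proof (rule nn_integral_cong)
    fix x assume x: "x \<in> space (PiM I' (\<lambda>_. lborel::real measure))"
    have e: "(\<lambda>k\<in>I. if k = i then c * (x(i:=y)) i else (x(i:=y)) k) = x(i := 0 + c * y)" for y
      using x II I by (auto simp: space_PiM PiE_def extensional_def fun_eq_iff)
    have m: "(\<lambda>y. g (x(i:=y))) \<in> borel_measurable borel"
      using measurable_comp[OF measurable_component_update[OF x II(2)] gm] by (simp add: comp_def)
    have c0: "c \<noteq> 0" using c by auto
    show "(\<integral>\<^sup>+ y. g (\<lambda>k\<in>I. if k = i then c * (x(i:=y)) i else (x(i:=y)) k) \<partial>lborel) = (\<integral>\<^sup>+ y. g (x(i:=y)) \<partial>lborel)"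
      unfolding e using nn_integral_real_affine[OF m c0, of 0] c by simp
  qed
  also have "\<dots> = (\<integral>\<^sup>+x. g x \<partial>LI I)"
    unfolding LI_def using Lps.product_nn_integral_insert[OF II(3,2) gm] II(1) by simp
  finally show ?thesis .
qed

definition LP :: "'i set \<Rightarrow> (('i\<Rightarrow>real)\<Rightarrow>('i\<Rightarrow>real)) \<Rightarrow> bool" where
  "LP I Q \<longleftrightarrow> Q \<in> measurable (PiM I (\<lambda>_. borel)) (PiM I (\<lambda>_. borel)) \<and>
     (\<forall>g\<in>borel_measurable (PiM I (\<lambda>_. borel)). (\<integral>\<^sup>+x. g (Q x) \<partial>LI I) = (\<integral>\<^sup>+x. g x \<partial>LI I))"

definition GP :: "'i set \<Rightarrow> (('i\<Rightarrow>real)\<Rightarrow>('i\<Rightarrow>real)) \<Rightarrow> bool" where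
  "GP I Q \<longleftrightarrow> Q \<in> measurable (PiM I (\<lambda>_. borel)) (PiM I (\<lambda>_. borel)) \<and>
     (\<forall>g\<in>borel_measurable (PiM I (\<lambda>_. borel)). (\<integral>\<^sup>+x. g (Q x) \<partial>GI I) = (\<integral>\<^sup>+x. g x \<partial>GI I))"

lemma LP_comp: assumes "LP I Q1" "LP I Q2" shows "LP I (\<lambda>x. Q2 (Q1 x))"
  unfolding LP_def
proof (intro conjI ballI)
  show "(\<lambda>x. Q2 (Q1 x)) \<in> measurable (PiM I (\<lambda>_. borel)) (PiM I (\<lambda>_. borel))"
    using assms unfolding LP_def by (auto intro: measurable_comp[unfolded comp_def])
  fix g :: "('a \<Rightarrow> real) \<Rightarrow> ennreal" assume g: "g \<in> borel_measurable (PiM I (\<lambda>_. borel))"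
  have g2: "(\<lambda>x. g (Q2 x)) \<in> borel_measurable (PiM I (\<lambda>_. borel))"
    using assms g unfolding LP_def by (auto intro: measurable_comp[unfolded comp_def])
  have "(\<integral>\<^sup>+x. g (Q2 (Q1 x)) \<partial>LI I) = (\<integral>\<^sup>+x. g (Q2 x) \<partial>LI I)"
    using bspec[OF conjunct2[OF assms(1)[unfolded LP_def]] g2] by simp
  also have "\<dots> = (\<integral>\<^sup>+x. g x \<partial>LI I)"
    using assms(2) g unfolding LP_def by blast
  finally show "(\<integral>\<^sup>+x. g (Q2 (Q1 x)) \<partial>LI I) = (\<integral>\<^sup>+x. g x \<partial>LI I)" .
qed

lemma GP_comp: assumes "GP I Q1" "GP I Q2" shows "GP I (\<lambda>x. Q2 (Q1 x))"
  unfolding GP_def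
proof (intro conjI ballI)
  show "(\<lambda>x. Q2 (Q1 x)) \<in> measurable (PiM I (\<lambda>_. borel)) (PiM I (\<lambda>_. borel))"
    using assms unfolding GP_def by (auto intro: measurable_comp[unfolded comp_def])
  fix g :: "('a \<Rightarrow> real) \<Rightarrow> ennreal" assume g: "g \<in> borel_measurable (PiM I (\<lambda>_. borel))"
  have g2: "(\<lambda>x. g (Q2 x)) \<in> borel_measurable (PiM I (\<lambda>_. borel))"
    using assms g unfolding GP_def by (auto intro: measurable_comp[unfolded comp_def])
  have "(\<integral>\<^sup>+x. g (Q2 (Q1 x)) \<partial>GI I) = (\<integral>\<^sup>+x. g (Q2 x) \<partial>GI I)"
    using bspec[OF conjunct2[OF assms(1)[unfolded GP_def]] g2] by simp
  also have "\<dots> = (\<integral>\<^sup>+x. g x \<partial>GI I)"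
    using assms(2) g unfolding GP_def by blast
  finally show "(\<integral>\<^sup>+x. g (Q2 (Q1 x)) \<partial>GI I) = (\<integral>\<^sup>+x. g x \<partial>GI I)" .
qed

lemma LP_cong:
  assumes "LP I Q1" "Q \<in> measurable (PiM I (\<lambda>_. borel)) (PiM I (\<lambda>_. borel))"
    "\<And>x. x \<in> space (PiM I (\<lambda>_. borel::real measure)) \<Longrightarrow> Q x = Q1 x"
  shows "LP I Q"
  unfolding LP_def
proof (intro conjI ballI assms(2))
  fix g :: "('a \<Rightarrow> real) \<Rightarrow> ennreal" assume g: "g \<in> borel_measurable (PiM I (\<lambda>_. borel))"
  have "(\<integral>\<^sup>+x. g (Q x) \<partial>LI I) = (\<integral>\<^sup>+x. g (Q1 x) \<partial>LI I)"
    by (rule nn_integral_cong) (simp add: assms(3) space_LI space_PiM)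
  then show "(\<integral>\<^sup>+x. g (Q x) \<partial>LI I) = (\<integral>\<^sup>+x. g x \<partial>LI I)" using assms(1) g unfolding LP_def by simp
qed

lemma GP_cong:
  assumes "GP I Q1" "Q \<in> measurable (PiM I (\<lambda>_. borel)) (PiM I (\<lambda>_. borel))"
    "\<And>x. x \<in> space (PiM I (\<lambda>_. borel::real measure)) \<Longrightarrow> Q x = Q1 x"
  shows "GP I Q"
  unfolding GP_def
proof (intro conjI ballI assms(2))
  fix g :: "('a \<Rightarrow> real) \<Rightarrow> ennreal" assume g: "g \<in> borel_measurable (PiM I (\<lambda>_. borel))"
  have "(\<integral>\<^sup>+x. g (Q x) \<partial>GI I) = (\<integral>\<^sup>+x. g (Q1 x) \<partial>GI I)"
    by (rule nn_integral_cong) (simp add: assms(3) space_GI space_PiM)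
  then show "(\<integral>\<^sup>+x. g (Q x) \<partial>GI I) = (\<integral>\<^sup>+x. g x \<partial>GI I)" using assms(1) g unfolding GP_def by simp
qed

lemma LP_shear:
  assumes "finite I" "i \<in> I" "j \<in> I" "i \<noteq> j"
  shows "LP I (\<lambda>x. \<lambda>k\<in>I. if k = i then x i + c * x j else x k)"
  unfolding LP_def
proof (intro conjI ballI)
  show "(\<lambda>x. \<lambda>k\<in>I. if k = i then x i + c * x j else x k) \<in> measurable (PiM I (\<lambda>_. borel)) (PiM I (\<lambda>_. borel))"
    using assms by measurable
  fix g :: "('a \<Rightarrow> real) \<Rightarrow> ennreal" assume g: "g \<in> borel_measurable (PiM I (\<lambda>_. borel))"
  then show "(\<integral>\<^sup>+x. g (\<lambda>k\<in>I. if k = i then x i + c * x j else x k) \<partial>LI I) = (\<integral>\<^sup>+x. g x \<partial>LI I)"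
    by (rule shear_inv[OF assms])
qed

lemma LP_scale:
  assumes "finite I" "i \<in> I" "\<bar>c\<bar> = 1"
  shows "LP I (\<lambda>x. \<lambda>k\<in>I. if k = i then c * x i else x k)"
  unfolding LP_def
proof (intro conjI ballI)
  show "(\<lambda>x. \<lambda>k\<in>I. if k = i then c * x i else x k) \<in> measurable (PiM I (\<lambda>_. borel)) (PiM I (\<lambda>_. borel))"
    using assms by measurable
  fix g :: "('a \<Rightarrow> real) \<Rightarrow> ennreal" assume g: "g \<in> borel_measurable (PiM I (\<lambda>_. borel))"
  then show "(\<integral>\<^sup>+x. g (\<lambda>k\<in>I. if k = i then c * x i else x k) \<partial>LI I) = (\<integral>\<^sup>+x. g x \<partial>LI I)"
    by (rule scale_inv[OF assms])
qed

definition giv :: "'i set \<Rightarrow> 'i \<Rightarrow> 'i \<Rightarrow> real \<Rightarrow> real \<Rightarrow> ('i\<Rightarrow>real) \<Rightarrow> ('i\<Rightarrow>real)" where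
  "giv I i j c s = (\<lambda>x. \<lambda>k\<in>I. if k = i then c * x i + s * x j else if k = j then - s * x i + c * x j else x k)"

lemma giv_meas[measurable]:
  assumes "i \<in> I" "j \<in> I"
  shows "giv I i j c s \<in> measurable (PiM I (\<lambda>_. borel)) (PiM I (\<lambda>_. borel))"
  unfolding giv_def using assms by measurable

lemma LP_giv:
  assumes I: "finite I" "i \<in> I" "j \<in> I" "i \<noteq> j" and cs: "c\<^sup>2 + s\<^sup>2 = 1" "c \<noteq> -1"
  shows "LP I (giv I i j c s)"
proof -
  define u where "u = s / (1 + c)"
  have c1: "1 + c \<noteq> 0" using cs by auto
  have us: "u * (1 + c) = s" using c1 by (simp add: u_def)
  have su: "s * u = 1 - c"
  proof -
    have "s * u * (1 + c) = s * s" using us by (simp add: algebra_simps)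
    also have "\<dots> = (1 - c) * (1 + c)" using cs by (simp add: power2_eq_square algebra_simps)
    finally show ?thesis using c1 by simp
  qed
  define S1 where "S1 = (\<lambda>x. \<lambda>k\<in>I. if k = i then x i + u * x j else x k)"
  define S2 where "S2 = (\<lambda>x. \<lambda>k\<in>I. if k = j then x j + (- s) * x i else x k)"
  have L1: "LP I S1" unfolding S1_def by (rule LP_shear[OF I])
  have L2: "LP I S2" unfolding S2_def by (rule LP_shear) (use I in auto)
  have L: "LP I (\<lambda>x. S1 (S2 (S1 x)))" using LP_comp[OF LP_comp[OF L1 L2] L1] by simp
  show ?thesis
  proof (rule LP_cong[OF L])
    show "giv I i j c s \<in> measurable (PiM I (\<lambda>_. borel)) (PiM I (\<lambda>_. borel))"
      using I by measurable
    fix x :: "'a \<Rightarrow> real" assume x: "x \<in> space (PiM I (\<lambda>_. borel::real measure))"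
    have e1: "x i + u * x j + u * (x j + - s * (x i + u * x j)) = (1 - s * u) * x i + (2 - s * u) * u * x j"
      by (simp add: algebra_simps)
    have e2: "(1 - s * u) * x i + (2 - s * u) * u * x j = c * x i + s * x j"
      unfolding su using us by (simp add: algebra_simps)
    have e3': "x j + - s * (x i + u * x j) = - s * x i + (1 - s * u) * x j"
      by (simp add: algebra_simps)
    have e3: "x j + - s * (x i + u * x j) = - s * x i + c * x j"
      unfolding e3' su by simp
    have Ri: "S1 (S2 (S1 x)) i = x i + u * x j + u * (x j + - s * (x i + u * x j))"
      using I by (simp add: S1_def S2_def)
    have Rj: "S1 (S2 (S1 x)) j = x j + - s * (x i + u * x j)"
      using I by (simp add: S1_def S2_def)
    have Rk: "S1 (S2 (S1 x)) k = x k" if "k \<in> I" "k \<noteq> i" "k \<noteq> j" for k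
      using I that by (simp add: S1_def S2_def)
    have Ro: "S1 (S2 (S1 x)) k = undefined" if "k \<notin> I" for k
      using I that by (simp add: S1_def S2_def)
    show "giv I i j c s x = S1 (S2 (S1 x))"
    proof
      fix k show "giv I i j c s x k = S1 (S2 (S1 x)) k"
      proof (cases "k \<in> I")
        case False then show ?thesis using Ro by (simp add: giv_def)
      next
        case True
        then consider "k = i" | "k = j" | "k \<noteq> i \<and> k \<noteq> j" by blast
        then show ?thesis
        proof cases
          case 1 then show ?thesis using I Ri e1 e2 by (simp add: giv_def)
        next
          case 2 then show ?thesis using I Rj e3 by (simp add: giv_def)
        next
          case 3 then show ?thesis using I True Rk by (simp add: giv_def)
        qed
      qed
    qed
  qed
qed

lemma prod_phi:
  assumes "finite I"
  shows "(\<Prod>k\<in>I. std_normal_density (x k)) = (1 / sqrt (2 * pi)) ^ card I * exp (- (\<Sum>k\<in>I. (x k)\<^sup>2) / 2)"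
proof -
  have "(\<Prod>k\<in>I. std_normal_density (x k)) = (\<Prod>k\<in>I. (1 / sqrt (2 * pi)) * exp (- (x k)\<^sup>2 / 2))"
    by (simp add: std_normal_density_def)
  also have "\<dots> = (1 / sqrt (2 * pi)) ^ card I * (\<Prod>k\<in>I. exp (- (x k)\<^sup>2 / 2))"
    by (rule trans[OF prod.distrib]) simp
  also have "(\<Prod>k\<in>I. exp (- (x k)\<^sup>2 / 2)) = exp (\<Sum>k\<in>I. - (x k)\<^sup>2 / 2)"
    by (rule exp_sum[OF assms, symmetric])
  also have "(\<Sum>k\<in>I. - (x k)\<^sup>2 / 2) = - (\<Sum>k\<in>I. (x k)\<^sup>2) / 2"
    by (simp add: sum_divide_distrib sum_negf)
  finally show ?thesis .
qed

lemma upd_meas: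
  "(\<lambda>p. (fst p)(i := snd p)) \<in> measurable (PiM I (\<lambda>_. borel) \<Otimes>\<^sub>M lborel) (PiM (insert i I) (\<lambda>_. borel::real measure))"
proof (rule measurable_PiM_single')
  fix k assume k: "k \<in> insert i I"
  show "(\<lambda>p. ((fst p)(i := snd p)) k) \<in> measurable (PiM I (\<lambda>_. borel) \<Otimes>\<^sub>M lborel) borel"
  proof (cases "k = i")
    case True then show ?thesis by simp
  next
    case False then have "k \<in> I" using k by auto
    then show ?thesis using False by simp
  qed
next
  show "(\<lambda>p. (fst p)(i := snd p)) \<in> space (PiM I (\<lambda>_. borel) \<Otimes>\<^sub>M lborel) \<rightarrow> (\<Pi>\<^sub>E k\<in>insert i I. space borel)"
    by (auto simp: space_pair_measure space_PiM PiE_def extensional_def)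
qed

lemma GI_dens:
  fixes I :: "'i set"
  assumes "finite I" "g \<in> borel_measurable (PiM I (\<lambda>_. borel))"
  shows "(\<integral>\<^sup>+x. g x \<partial>GI I) = (\<integral>\<^sup>+x. ennreal (\<Prod>k\<in>I. std_normal_density (x k)) * g x \<partial>LI I)"
  using assms
proof (induction I arbitrary: g rule: finite_induct)
  case empty
  show ?case unfolding GI_def LI_def PiM_empty by simp
next
  case (insert i I)
  note g = insert.prems
  have sG: "sets (PiM (insert i I) (\<lambda>_. stdN)) = sets (PiM (insert i I) (\<lambda>_. borel))"
    by (intro sets_PiM_cong) auto
  have sL: "sets (PiM (insert i I) (\<lambda>_. lborel::real measure)) = sets (PiM (insert i I) (\<lambda>_. borel))"
    by (intro sets_PiM_cong) auto
  have gG: "g \<in> borel_measurable (PiM (insert i I) (\<lambda>_. stdN))"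
    using sG g by (simp cong: measurable_cong_sets)
  have gprod[measurable]: "(\<lambda>x. ennreal (\<Prod>k\<in>insert i I. std_normal_density (x k)) * g x) \<in> borel_measurable (PiM (insert i I) (\<lambda>_. borel))"
    using g by measurable
  have gL: "(\<lambda>x. ennreal (\<Prod>k\<in>insert i I. std_normal_density (x k)) * g x) \<in> borel_measurable (PiM (insert i I) (\<lambda>_. lborel))"
    using sL gprod by (simp cong: measurable_cong_sets)
  define h where "h = (\<lambda>x. \<integral>\<^sup>+y. ennreal (std_normal_density y) * g (x(i := y)) \<partial>lborel)"
  have gu: "(\<lambda>p. g ((fst p)(i := snd p))) \<in> borel_measurable (PiM I (\<lambda>_. borel) \<Otimes>\<^sub>M lborel)"
    using measurable_comp[OF upd_meas g] by (simp add: comp_def)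
  have hm: "h \<in> borel_measurable (PiM I (\<lambda>_. borel))"
  proof -
    have "(\<lambda>(x, y). ennreal (std_normal_density y) * g (x(i := y))) \<in> borel_measurable (PiM I (\<lambda>_. borel) \<Otimes>\<^sub>M lborel)"
      using gu by (simp add: case_prod_beta')
    then show ?thesis unfolding h_def by (rule lborel.borel_measurable_nn_integral)
  qed
  have gux: "(\<lambda>y. g (x(i := y))) \<in> borel_measurable borel" if "x \<in> space (PiM I (\<lambda>_. borel::real measure))" for x
    using measurable_comp[OF measurable_component_update[OF that insert(2)] g] by (simp add: comp_def)
  have "(\<integral>\<^sup>+x. g x \<partial>GI (insert i I)) = (\<integral>\<^sup>+ x. (\<integral>\<^sup>+ y. g (x(i := y)) \<partial>stdN) \<partial>(PiM I (\<lambda>_. stdN)))"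
    unfolding GI_def by (rule Gps.product_nn_integral_insert[OF insert(1,2) gG])
  also have "\<dots> = (\<integral>\<^sup>+ x. h x \<partial>GI I)"
    unfolding GI_def
  proof (rule nn_integral_cong)
    fix x assume x: "x \<in> space (PiM I (\<lambda>_. stdN))"
    then have x': "x \<in> space (PiM I (\<lambda>_. borel::real measure))" by (simp add: space_PiM)
    have gx: "(\<lambda>y. g (x(i := y))) \<in> borel_measurable lborel"
      using gux[OF x'] by simp
    show "(\<integral>\<^sup>+ y. g (x(i := y)) \<partial>stdN) = h x"
      unfolding h_def by (rule nn_integral_density[OF _ gx]) simp
  qed
  also have "\<dots> = (\<integral>\<^sup>+x. ennreal (\<Prod>k\<in>I. std_normal_density (x k)) * h x \<partial>LI I)"
    by (rule insert.IH[OF hm])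
  also have "\<dots> = (\<integral>\<^sup>+ x. (\<integral>\<^sup>+ y. ennreal (\<Prod>k\<in>insert i I. std_normal_density ((x(i := y)) k)) * g (x(i := y)) \<partial>lborel) \<partial>(PiM I (\<lambda>_. lborel)))"
    unfolding LI_def
  proof (rule nn_integral_cong)
    fix x assume x: "x \<in> space (PiM I (\<lambda>_. lborel::real measure))"
    then have x': "x \<in> space (PiM I (\<lambda>_. borel::real measure))" by (simp add: space_PiM)
    have p0: "(\<Prod>k\<in>I. std_normal_density ((x(i := y)) k)) = (\<Prod>k\<in>I. std_normal_density (x k))" for y
      using insert(2) by (intro prod.cong) auto
    have p: "(\<Prod>k\<in>insert i I. std_normal_density ((x(i := y)) k)) = std_normal_density y * (\<Prod>k\<in>I. std_normal_density (x k))" for y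
      using insert(1,2) p0 by simp
    have m: "(\<lambda>y. ennreal (std_normal_density y) * g (x(i := y))) \<in> borel_measurable lborel"
      using gux[OF x'] by simp
    have "ennreal (\<Prod>k\<in>I. std_normal_density (x k)) * h x = (\<integral>\<^sup>+y. ennreal (\<Prod>k\<in>I. std_normal_density (x k)) * (ennreal (std_normal_density y) * g (x(i:=y))) \<partial>lborel)"
      unfolding h_def by (rule nn_integral_cmult[OF m, symmetric])
    then show "ennreal (\<Prod>k\<in>I. std_normal_density (x k)) * h x = (\<integral>\<^sup>+ y. ennreal (\<Prod>k\<in>insert i I. std_normal_density ((x(i := y)) k)) * g (x(i := y)) \<partial>lborel)"
      unfolding p by (simp add: ennreal_mult' prod_nonneg mult.assoc mult.commute mult.left_commute)
  qed
  also have "\<dots> = (\<integral>\<^sup>+x. ennreal (\<Prod>k\<in>insert i I. std_normal_density (x k)) * g x \<partial>LI (insert i I))"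
    unfolding LI_def by (rule Lps.product_nn_integral_insert[OF insert(1,2) gL, symmetric])
  finally show ?case .
qed

lemma GP_of_LP:
  fixes I :: "'i set"
  assumes I: "finite I" and L: "LP I Q"
    and nrm: "\<And>x. x \<in> space (PiM I (\<lambda>_. borel::real measure)) \<Longrightarrow> (\<Sum>k\<in>I. (Q x k)\<^sup>2) = (\<Sum>k\<in>I. (x k)\<^sup>2)"
  shows "GP I Q"
  unfolding GP_def
proof (intro conjI ballI)
  have Qm[measurable]: "Q \<in> measurable (PiM I (\<lambda>_. borel)) (PiM I (\<lambda>_. borel))" using L unfolding LP_def by simp
  then show "Q \<in> measurable (PiM I (\<lambda>_. borel)) (PiM I (\<lambda>_. borel))" .
  fix g :: "('i \<Rightarrow> real) \<Rightarrow> ennreal" assume g[measurable]: "g \<in> borel_measurable (PiM I (\<lambda>_. borel))"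
  have gq: "(\<lambda>x. g (Q x)) \<in> borel_measurable (PiM I (\<lambda>_. borel))" by measurable
  define F where "F = (\<lambda>z. ennreal (\<Prod>k\<in>I. std_normal_density (z k)) * g z)"
  have Fm: "F \<in> borel_measurable (PiM I (\<lambda>_. borel))" unfolding F_def by measurable
  have "(\<integral>\<^sup>+x. g (Q x) \<partial>GI I) = (\<integral>\<^sup>+x. ennreal (\<Prod>k\<in>I. std_normal_density (x k)) * g (Q x) \<partial>LI I)"
    by (rule GI_dens[OF I gq])
  also have "\<dots> = (\<integral>\<^sup>+x. F (Q x) \<partial>LI I)"
  proof (rule nn_integral_cong)
    fix x assume "x \<in> space (LI I)"
    then have x: "x \<in> space (PiM I (\<lambda>_. borel::real measure))" by (simp add: space_LI space_PiM)
    show "ennreal (\<Prod>k\<in>I. std_normal_density (x k)) * g (Q x) = F (Q x)"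
      unfolding F_def prod_phi[OF I] nrm[OF x] by simp
  qed
  also have "\<dots> = (\<integral>\<^sup>+x. F x \<partial>LI I)"
    using bspec[OF conjunct2[OF L[unfolded LP_def]] Fm] by simp
  also have "\<dots> = (\<integral>\<^sup>+x. g x \<partial>GI I)"
    unfolding F_def by (rule GI_dens[OF I g, symmetric])
  finally show "(\<integral>\<^sup>+x. g (Q x) \<partial>GI I) = (\<integral>\<^sup>+x. g x \<partial>GI I)" .
qed

definition ORTH :: "'i set \<Rightarrow> (('i\<Rightarrow>real)\<Rightarrow>('i\<Rightarrow>real)) \<Rightarrow> bool" where
  "ORTH I Q \<longleftrightarrow> (\<forall>x\<in>space (PiM I (\<lambda>_. borel::real measure)). \<forall>y\<in>space (PiM I (\<lambda>_. borel::real measure)).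
      (\<Sum>k\<in>I. Q x k * Q y k) = (\<Sum>k\<in>I. x k * y k))"

lemma ORTH_norm: "ORTH I Q \<Longrightarrow> x \<in> space (PiM I (\<lambda>_. borel::real measure)) \<Longrightarrow> (\<Sum>k\<in>I. (Q x k)\<^sup>2) = (\<Sum>k\<in>I. (x k)\<^sup>2)"
  unfolding ORTH_def by (simp add: power2_eq_square)

lemma ORTH_comp:
  assumes "ORTH I Q1" "ORTH I Q2" "Q1 \<in> measurable (PiM I (\<lambda>_. borel)) (PiM I (\<lambda>_. borel))"
  shows "ORTH I (\<lambda>x. Q2 (Q1 x))"
  using assms measurable_space[OF assms(3)] unfolding ORTH_def by simp

lemma sum_split2:
  assumes "finite I" "i \<in> I" "j \<in> I" "i \<noteq> j"
  shows "sum f I = f i + f j + sum f (I - {i, j})"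
proof -
  have "sum f I = f i + sum f (I - {i})" using assms by (simp add: sum.remove)
  also have "sum f (I - {i}) = f j + sum f (I - {i} - {j})" using assms by (simp add: sum.remove)
  also have "I - {i} - {j} = I - {i, j}" by auto
  finally show ?thesis by (simp add: add.assoc)
qed

lemma ORTH_giv:
  assumes I: "finite I" "i \<in> I" "j \<in> I" "i \<noteq> j" and cs: "c\<^sup>2 + s\<^sup>2 = 1"
  shows "ORTH I (giv I i j c s)"
  unfolding ORTH_def
proof (intro ballI)
  fix x y :: "'a \<Rightarrow> real"
  let ?R = "I - {i, j}"
  have r: "(\<Sum>k\<in>?R. giv I i j c s x k * giv I i j c s y k) = (\<Sum>k\<in>?R. x k * y k)"
    by (rule sum.cong) (auto simp: giv_def)
  have a: "(c * x i + s * x j) * (c * y i + s * y j) + (- s * x i + c * x j) * (- s * y i + c * y j)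
      = (c\<^sup>2 + s\<^sup>2) * (x i * y i) + (c\<^sup>2 + s\<^sup>2) * (x j * y j)"
    by (simp add: power2_eq_square algebra_simps)
  show "(\<Sum>k\<in>I. giv I i j c s x k * giv I i j c s y k) = (\<Sum>k\<in>I. x k * y k)"
    using I a cs r by (simp add: sum_split2[OF I] giv_def)
qed

lemma GP_giv:
  assumes I: "finite I" "i \<in> I" "j \<in> I" "i \<noteq> j" and cs: "c\<^sup>2 + s\<^sup>2 = 1" "c \<noteq> -1"
  shows "GP I (giv I i j c s)"
  by (rule GP_of_LP[OF I(1) LP_giv[OF I cs]]) (rule ORTH_norm[OF ORTH_giv[OF I cs(1)]])

lemma ORTH_scale:
  assumes I: "finite I" "i \<in> I" and c: "\<bar>c\<bar> = 1"
  shows "ORTH I (\<lambda>x. \<lambda>k\<in>I. if k = i then c * x i else x k)"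
  unfolding ORTH_def
proof (intro ballI)
  fix x y :: "'a \<Rightarrow> real"
  have c2: "c * c = 1" using c by (metis abs_mult_self_eq mult.right_neutral)
  have r: "(\<Sum>k\<in>I - {i}. (\<lambda>k\<in>I. if k = i then c * x i else x k) k * (\<lambda>k\<in>I. if k = i then c * y i else y k) k) = (\<Sum>k\<in>I - {i}. x k * y k)"
    by (rule sum.cong) auto
  have "c * x i * (c * y i) = x i * y i" using c2 by (simp add: algebra_simps)
  then show "(\<Sum>k\<in>I. (\<lambda>k\<in>I. if k = i then c * x i else x k) k * (\<lambda>k\<in>I. if k = i then c * y i else y k) k) = (\<Sum>k\<in>I. x k * y k)"
    using I r by (simp add: sum.remove)
qed

lemma GP_scale:
  assumes I: "finite I" "i \<in> I" and c: "\<bar>c\<bar> = 1"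
  shows "GP I (\<lambda>x. \<lambda>k\<in>I. if k = i then c * x i else x k)"
  by (rule GP_of_LP[OF I(1) LP_scale[OF I c]]) (rule ORTH_norm[OF ORTH_scale[OF I c]])

lemma upd_measN:
  "(\<lambda>p. (fst p)(i := snd p)) \<in> measurable (PiM I (\<lambda>_. borel) \<Otimes>\<^sub>M stdN) (PiM (insert i I) (\<lambda>_. borel::real measure))"
proof (rule measurable_PiM_single')
  fix k assume k: "k \<in> insert i I"
  show "(\<lambda>p. ((fst p)(i := snd p)) k) \<in> measurable (PiM I (\<lambda>_. borel) \<Otimes>\<^sub>M stdN) borel"
  proof (cases "k = i")
    case True then show ?thesis by simp
  next
    case False then have "k \<in> I" using k by auto
    then show ?thesis using False by simp
  qed
next
  show "(\<lambda>p. (fst p)(i := snd p)) \<in> space (PiM I (\<lambda>_. borel) \<Otimes>\<^sub>M stdN) \<rightarrow> (\<Pi>\<^sub>E k\<in>insert i I. space borel)"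
    by (auto simp: space_pair_measure space_PiM PiE_def extensional_def)
qed

definition ext1 :: "'i set \<Rightarrow> 'i \<Rightarrow> (('i\<Rightarrow>real)\<Rightarrow>('i\<Rightarrow>real)) \<Rightarrow> ('i\<Rightarrow>real) \<Rightarrow> ('i\<Rightarrow>real)" where
  "ext1 I i1 Q = (\<lambda>x. \<lambda>k\<in>insert i1 I. if k = i1 then x i1 else Q (restrict x I) k)"

lemma ext1_meas:
  assumes Q: "Q \<in> measurable (PiM I (\<lambda>_. borel)) (PiM I (\<lambda>_. borel::real measure))"
  shows "ext1 I i1 Q \<in> measurable (PiM (insert i1 I) (\<lambda>_. borel)) (PiM (insert i1 I) (\<lambda>_. borel::real measure))"
  unfolding ext1_def
proof (rule measurable_restrict)
  fix k assume k: "k \<in> insert i1 I"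
  show "(\<lambda>x. if k = i1 then x i1 else Q (restrict x I) k) \<in> borel_measurable (PiM (insert i1 I) (\<lambda>_. borel))"
  proof (cases "k = i1")
    case True then show ?thesis by simp
  next
    case False then have kI: "k \<in> I" using k by auto
    have "(\<lambda>x. Q (restrict x I)) \<in> measurable (PiM (insert i1 I) (\<lambda>_. borel)) (PiM I (\<lambda>_. borel::real measure))"
      using measurable_comp[OF measurable_restrict_subset[of I "insert i1 I"] Q] by (auto simp: comp_def)
    then have "(\<lambda>x. Q (restrict x I) k) \<in> borel_measurable (PiM (insert i1 I) (\<lambda>_. borel))"
      using measurable_comp[OF _ measurable_component_singleton[OF kI]] by (auto simp: comp_def)
    then show ?thesis using False by simp
  qed
qed

lemma ext1_upd:
  assumes Q: "Q \<in> measurable (PiM I (\<lambda>_. borel)) (PiM I (\<lambda>_. borel::real measure))" and i1: "i1 \<notin> I"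
    and x: "x \<in> space (PiM I (\<lambda>_. borel::real measure))"
  shows "ext1 I i1 Q (x(i1 := y)) = (Q x)(i1 := y)"
proof -
  have r: "restrict (x(i1 := y)) I = x" using x i1 by (auto simp: space_PiM PiE_def extensional_def fun_eq_iff)
  have Qx: "Q x \<in> space (PiM I (\<lambda>_. borel::real measure))" using measurable_space[OF Q x] .
  show ?thesis unfolding ext1_def r using Qx by (auto simp: space_PiM PiE_def extensional_def fun_eq_iff)
qed

lemma GP_ext:
  fixes I :: "'i set"
  assumes I: "finite I" "i1 \<notin> I" and G: "GP I Q"
  shows "GP (insert i1 I) (ext1 I i1 Q)"
  unfolding GP_def
proof (intro conjI ballI)
  have Q[measurable]: "Q \<in> measurable (PiM I (\<lambda>_. borel)) (PiM I (\<lambda>_. borel::real measure))" using G unfolding GP_def by simp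
  have E: "ext1 I i1 Q \<in> measurable (PiM (insert i1 I) (\<lambda>_. borel)) (PiM (insert i1 I) (\<lambda>_. borel::real measure))"
    by (rule ext1_meas[OF Q])
  then show "ext1 I i1 Q \<in> measurable (PiM (insert i1 I) (\<lambda>_. borel)) (PiM (insert i1 I) (\<lambda>_. borel::real measure))" .
  fix g :: "('i \<Rightarrow> real) \<Rightarrow> ennreal" assume g: "g \<in> borel_measurable (PiM (insert i1 I) (\<lambda>_. borel))"
  have sG: "sets (PiM (insert i1 I) (\<lambda>_. stdN)) = sets (PiM (insert i1 I) (\<lambda>_. borel))"
    by (intro sets_PiM_cong) auto
  have gE: "(\<lambda>x. g (ext1 I i1 Q x)) \<in> borel_measurable (PiM (insert i1 I) (\<lambda>_. stdN))"
    using measurable_comp[OF E g] sG by (simp add: comp_def cong: measurable_cong_sets)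
  have gG: "g \<in> borel_measurable (PiM (insert i1 I) (\<lambda>_. stdN))"
    using sG g by (simp cong: measurable_cong_sets)
  define H where "H = (\<lambda>z. \<integral>\<^sup>+y. g (z(i1 := y)) \<partial>stdN)"
  have Hm: "H \<in> borel_measurable (PiM I (\<lambda>_. borel))"
  proof -
    have sfN: "sigma_finite_measure stdN"
      using prob_stdN prob_space_imp_sigma_finite by blast
    have "(\<lambda>(x, y). g (x(i1 := y))) \<in> borel_measurable (PiM I (\<lambda>_. borel) \<Otimes>\<^sub>M stdN)"
      using measurable_comp[OF upd_measN g] by (simp add: comp_def case_prod_beta')
    then show ?thesis unfolding H_def by (rule sigma_finite_measure.borel_measurable_nn_integral[OF sfN])
  qed
  have "(\<integral>\<^sup>+x. g (ext1 I i1 Q x) \<partial>GI (insert i1 I)) = (\<integral>\<^sup>+ x. (\<integral>\<^sup>+ y. g (ext1 I i1 Q (x(i1 := y))) \<partial>stdN) \<partial>(PiM I (\<lambda>_. stdN)))"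
    unfolding GI_def by (rule Gps.product_nn_integral_insert[OF I gE])
  also have "\<dots> = (\<integral>\<^sup>+ x. H (Q x) \<partial>GI I)"
    unfolding GI_def
  proof (rule nn_integral_cong)
    fix x assume "x \<in> space (PiM I (\<lambda>_. stdN))"
    then have x: "x \<in> space (PiM I (\<lambda>_. borel::real measure))" by (simp add: space_PiM)
    show "(\<integral>\<^sup>+ y. g (ext1 I i1 Q (x(i1 := y))) \<partial>stdN) = H (Q x)"
      unfolding H_def ext1_upd[OF Q I(2) x] ..
  qed
  also have "\<dots> = (\<integral>\<^sup>+ x. H x \<partial>GI I)"
    using bspec[OF conjunct2[OF G[unfolded GP_def]] Hm] by simp
  also have "\<dots> = (\<integral>\<^sup>+x. g x \<partial>GI (insert i1 I))"
    unfolding GI_def H_def by (rule Gps.product_nn_integral_insert[OF I gG, symmetric])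
  finally show "(\<integral>\<^sup>+x. g (ext1 I i1 Q x) \<partial>GI (insert i1 I)) = (\<integral>\<^sup>+x. g x \<partial>GI (insert i1 I))" .
qed

lemma ORTH_ext:
  fixes I :: "'i set"
  assumes I: "finite I" "i1 \<notin> I" and O: "ORTH I Q"
  shows "ORTH (insert i1 I) (ext1 I i1 Q)"
  unfolding ORTH_def
proof (intro ballI)
  fix x y :: "'i \<Rightarrow> real"
  have rx: "restrict x I \<in> space (PiM I (\<lambda>_. borel::real measure))" "restrict y I \<in> space (PiM I (\<lambda>_. borel::real measure))"
    by (auto simp: space_PiM)
  have s1: "(\<Sum>k\<in>I. ext1 I i1 Q x k * ext1 I i1 Q y k) = (\<Sum>k\<in>I. Q (restrict x I) k * Q (restrict y I) k)"
    using I by (intro sum.cong) (auto simp: ext1_def)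
  have s2: "(\<Sum>k\<in>I. Q (restrict x I) k * Q (restrict y I) k) = (\<Sum>k\<in>I. x k * y k)"
    using O rx unfolding ORTH_def by simp
  show "(\<Sum>k\<in>insert i1 I. ext1 I i1 Q x k * ext1 I i1 Q y k) = (\<Sum>k\<in>insert i1 I. x k * y k)"
    using I s1 s2 by (simp add: ext1_def)
qed

lemma Rot:
  fixes I :: "'i set"
  assumes "finite I" "i0 \<in> I" "(\<Sum>k\<in>I. (a k)\<^sup>2) = 1"
  shows "\<exists>Q. GP I Q \<and> ORTH I Q \<and> (\<forall>x\<in>space (PiM I (\<lambda>_. borel::real measure)). Q x i0 = (\<Sum>k\<in>I. a k * x k))"
  using assms
proof (induction "card I" arbitrary: I a)
  case 0 then show ?case by auto
next
  case (Suc n)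
  show ?case
  proof (cases "I = {i0}")
    case True
    have a2: "(a i0)\<^sup>2 = 1" using Suc.prems True by simp
    then have ab: "\<bar>a i0\<bar> = 1" using power2_eq_1_iff by fastforce
    define Q where "Q = (\<lambda>x. \<lambda>k\<in>I. if k = i0 then a i0 * x i0 else x k)"
    have "GP I Q" unfolding Q_def by (rule GP_scale[OF Suc.prems(1,2) ab])
    moreover have "ORTH I Q" unfolding Q_def by (rule ORTH_scale[OF Suc.prems(1,2) ab])
    moreover have "\<forall>x\<in>space (PiM I (\<lambda>_. borel::real measure)). Q x i0 = (\<Sum>k\<in>I. a k * x k)"
      using True by (simp add: Q_def)
    ultimately show ?thesis by blast
  next
    case False
    obtain i1 where i1: "i1 \<in> I" "i1 \<noteq> i0" using Suc.prems(2) False by auto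
    define I' where "I' = I - {i1}"
    have I': "finite I'" "i1 \<notin> I'" "I = insert i1 I'" "i0 \<in> I'" "n = card I'"
      using Suc.prems Suc.hyps(2) i1 by (auto simp: I'_def)
    define r where "r = sqrt ((a i0)\<^sup>2 + (a i1)\<^sup>2)"
    define c where "c = (if a i1 = 0 then 1 else a i0 / r)"
    define s where "s = (if a i1 = 0 then 0 else a i1 / r)"
    have cs: "c\<^sup>2 + s\<^sup>2 = 1 \<and> c \<noteq> -1 \<and> - s * a i0 + c * a i1 = 0"
    proof (cases "a i1 = 0")
      case True then show ?thesis by (simp add: c_def s_def)
    next
      case False
      have pos: "0 < (a i0)\<^sup>2 + (a i1)\<^sup>2" using False by (simp add: add_nonneg_pos)
      then have r0: "0 < r" by (simp add: r_def)
      have r2: "r\<^sup>2 = (a i0)\<^sup>2 + (a i1)\<^sup>2" using pos by (simp add: r_def)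
      have 1: "c\<^sup>2 + s\<^sup>2 = 1" using False r0 r2 by (simp add: c_def s_def power_divide add_divide_distrib[symmetric])
      have 2: "c \<noteq> -1"
      proof
        assume "c = -1"
        then have "a i0 = - r" using False r0 by (simp add: c_def divide_eq_eq)
        then have "(a i0)\<^sup>2 = r\<^sup>2" by simp
        then show False using r2 False by simp
      qed
      have 3: "- s * a i0 + c * a i1 = 0" using False by (simp add: c_def s_def)
      show ?thesis using 1 2 3 by blast
    qed
    define G where "G = giv I i0 i1 c s"
    have GG: "GP I G" unfolding G_def using Suc.prems(1,2) i1 cs by (intro GP_giv) auto
    have GO: "ORTH I G" unfolding G_def using Suc.prems(1,2) i1 cs by (intro ORTH_giv) auto
    have Gm: "G \<in> measurable (PiM I (\<lambda>_. borel)) (PiM I (\<lambda>_. borel::real measure))"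
      using GG unfolding GP_def by simp
    define a' where "a' = G (restrict a I)"
    have ra: "restrict a I \<in> space (PiM I (\<lambda>_. borel::real measure))" by (simp add: space_PiM)
    have a'i1: "a' i1 = 0" using cs i1 Suc.prems(2) by (simp add: a'_def G_def giv_def)
    have nI: "(\<Sum>k\<in>I. (a' k)\<^sup>2) = 1"
    proof -
      have "(\<Sum>k\<in>I. (a' k)\<^sup>2) = (\<Sum>k\<in>I. (restrict a I k)\<^sup>2)" unfolding a'_def by (rule ORTH_norm[OF GO ra])
      also have "\<dots> = (\<Sum>k\<in>I. (a k)\<^sup>2)" by (rule sum.cong) auto
      finally show ?thesis using Suc.prems(3) by simp
    qed
    have nI': "(\<Sum>k\<in>I'. (a' k)\<^sup>2) = 1"
      using nI a'i1 Suc.prems(1) i1 by (simp add: I'_def sum.remove)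
    obtain Q' where Q': "GP I' Q'" "ORTH I' Q'" "\<forall>x\<in>space (PiM I' (\<lambda>_. borel::real measure)). Q' x i0 = (\<Sum>k\<in>I'. a' k * x k)"
      using Suc.hyps(1)[OF I'(5) I'(1) I'(4) nI'] by blast
    have Q'm: "Q' \<in> measurable (PiM I' (\<lambda>_. borel)) (PiM I' (\<lambda>_. borel::real measure))"
      using Q'(1) unfolding GP_def by simp
    define Q where "Q = (\<lambda>x. ext1 I' i1 Q' (G x))"
    have GE: "GP I (ext1 I' i1 Q')" using GP_ext[OF I'(1,2) Q'(1)] I'(3) by simp
    have OE: "ORTH I (ext1 I' i1 Q')" using ORTH_ext[OF I'(1,2) Q'(2)] I'(3) by simp
    have "GP I Q" unfolding Q_def by (rule GP_comp[OF GG GE])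
    moreover have "ORTH I Q" unfolding Q_def by (rule ORTH_comp[OF GO OE Gm])
    moreover have "\<forall>x\<in>space (PiM I (\<lambda>_. borel::real measure)). Q x i0 = (\<Sum>k\<in>I. a k * x k)"
    proof
      fix x assume x: "x \<in> space (PiM I (\<lambda>_. borel::real measure))"
      have rG: "restrict (G x) I' \<in> space (PiM I' (\<lambda>_. borel::real measure))" by (simp add: space_PiM)
      have "Q x i0 = Q' (restrict (G x) I') i0" using I' i1 by (simp add: Q_def ext1_def)
      also have "\<dots> = (\<Sum>k\<in>I'. a' k * restrict (G x) I' k)" using Q'(3) rG by blast
      also have "\<dots> = (\<Sum>k\<in>I'. a' k * G x k)" by (rule sum.cong) auto
      also have "\<dots> = (\<Sum>k\<in>I. a' k * G x k)" using a'i1 Suc.prems(1) i1 by (simp add: I'_def sum.remove)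
      also have "\<dots> = (\<Sum>k\<in>I. restrict a I k * x k)" using GO ra x unfolding ORTH_def a'_def by blast
      also have "\<dots> = (\<Sum>k\<in>I. a k * x k)" by (rule sum.cong) auto
      finally show "Q x i0 = (\<Sum>k\<in>I. a k * x k)" .
    qed
    ultimately show ?thesis by blast
  qed
qed

lemma upd_nn_meas:
  assumes g: "g \<in> borel_measurable (PiM (insert i I) (\<lambda>_. borel::real measure))"
  shows "(\<lambda>z. \<integral>\<^sup>+y. g (z(i := y)) \<partial>stdN) \<in> borel_measurable (PiM I (\<lambda>_. borel))"
proof -
  have sfN: "sigma_finite_measure stdN"
    using prob_stdN prob_space_imp_sigma_finite by blast
  have "(\<lambda>(x, y). g (x(i := y))) \<in> borel_measurable (PiM I (\<lambda>_. borel) \<Otimes>\<^sub>M stdN)"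
    using measurable_comp[OF upd_measN g] by (simp add: comp_def case_prod_beta')
  then show ?thesis by (rule sigma_finite_measure.borel_measurable_nn_integral[OF sfN])
qed

lemma prob_GI: "prob_space (GI I)"
  unfolding GI_def by (rule prob_space_PiM) (rule prob_stdN)

lemma Tlem:
  fixes J :: "'j set" and I :: "'i set" and A :: "'j \<Rightarrow> 'i \<Rightarrow> real"
  assumes "finite J" "finite I" "\<forall>j\<in>J. \<forall>j'\<in>J. (\<Sum>i\<in>I. A j i * A j' i) = (if j = j' then 1 else 0)"
    "g \<in> borel_measurable (PiM J (\<lambda>_. borel))"
  shows "(\<integral>\<^sup>+z. g (\<lambda>j\<in>J. \<Sum>i\<in>I. A j i * z i) \<partial>GI I) = (\<integral>\<^sup>+w. g w \<partial>GI J)"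
  using assms
proof (induction J arbitrary: I A g rule: finite_induct)
  case empty
  interpret P: prob_space "GI I" by (rule prob_GI)
  have "(\<integral>\<^sup>+z. g (\<lambda>j\<in>{}. \<Sum>i\<in>I. A j i * z i) \<partial>GI I) = (\<integral>\<^sup>+z. g (\<lambda>_. undefined) \<partial>GI I)"
    by (simp add: restrict_def)
  also have "\<dots> = g (\<lambda>_. undefined)" by (simp add: P.emeasure_space_1)
  also have "\<dots> = (\<integral>\<^sup>+w. g w \<partial>GI {})" unfolding GI_def PiM_empty by (subst nn_integral_count_space_finite) auto
  finally show ?case .
next
  case (insert j0 J)
  note orth = insert.prems(2)
  note g = insert.prems(3)
  have n1: "(\<Sum>i\<in>I. (A j0 i)\<^sup>2) = 1" using orth by (simp add: power2_eq_square)
  then have "I \<noteq> {}" by auto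
  then obtain i0 where i0: "i0 \<in> I" by auto
  obtain Q where Q: "GP I Q" "ORTH I Q" "\<forall>x\<in>space (PiM I (\<lambda>_. borel::real measure)). Q x i0 = (\<Sum>k\<in>I. A j0 k * x k)"
    using Rot[OF insert.prems(1) i0 n1] by blast
  have Qm[measurable]: "Q \<in> measurable (PiM I (\<lambda>_. borel)) (PiM I (\<lambda>_. borel::real measure))"
    using Q(1) unfolding GP_def by simp
  define B where "B = (\<lambda>j i. Q (restrict (A j) I) i)"
  have rA: "restrict (A j) I \<in> space (PiM I (\<lambda>_. borel::real measure))" for j by (simp add: space_PiM)
  have F1: "(\<Sum>i\<in>I. A j i * z i) = (\<Sum>i\<in>I. B j i * Q z i)" if z: "z \<in> space (PiM I (\<lambda>_. borel::real measure))" for j z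
  proof -
    have "(\<Sum>i\<in>I. B j i * Q z i) = (\<Sum>i\<in>I. restrict (A j) I i * z i)"
      using Q(2) rA z unfolding ORTH_def B_def by blast
    also have "\<dots> = (\<Sum>i\<in>I. A j i * z i)" by (rule sum.cong) auto
    finally show ?thesis by simp
  qed
  have F2: "B j i0 = (if j = j0 then 1 else 0)" if "j \<in> insert j0 J" for j
  proof -
    have "B j i0 = (\<Sum>k\<in>I. A j0 k * restrict (A j) I k)" using Q(3) rA unfolding B_def by blast
    also have "\<dots> = (\<Sum>k\<in>I. A j0 k * A j k)" by (rule sum.cong) auto
    also have "\<dots> = (if j0 = j then 1 else 0)" using orth that by blast
    finally show ?thesis by auto
  qed
  define I' where "I' = I - {i0}"
  have I': "finite I'" "i0 \<notin> I'" "I = insert i0 I'" using insert.prems(1) i0 by (auto simp: I'_def)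
  have nB: "(\<Sum>i\<in>I. B j i * B j' i) = (\<Sum>i\<in>I. A j i * A j' i)" for j j'
  proof -
    have "(\<Sum>i\<in>I. B j i * B j' i) = (\<Sum>i\<in>I. restrict (A j) I i * restrict (A j') I i)"
      using Q(2) rA unfolding ORTH_def B_def by blast
    also have "\<dots> = (\<Sum>i\<in>I. A j i * A j' i)" by (rule sum.cong) auto
    finally show ?thesis .
  qed
  have F3: "B j0 i = 0" if "i \<in> I'" for i
  proof -
    have "(\<Sum>i\<in>I. (B j0 i)\<^sup>2) = 1" using nB[of j0 j0] n1 by (simp add: power2_eq_square)
    moreover have "(\<Sum>i\<in>I. (B j0 i)\<^sup>2) = (B j0 i0)\<^sup>2 + (\<Sum>i\<in>I'. (B j0 i)\<^sup>2)"
      using I' by simp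
    moreover have "B j0 i0 = 1" using F2[of j0] by simp
    ultimately have "(\<Sum>i\<in>I'. (B j0 i)\<^sup>2) = 0" by simp
    then have "\<forall>i\<in>I'. (B j0 i)\<^sup>2 = 0" using I'(1) by (subst (asm) sum_nonneg_eq_0_iff) auto
    then show ?thesis using that by simp
  qed
  have F4: "\<forall>j\<in>J. \<forall>j'\<in>J. (\<Sum>i\<in>I'. B j i * B j' i) = (if j = j' then 1 else 0)"
  proof (intro ballI)
    fix j j' assume jj: "j \<in> J" "j' \<in> J"
    have "j \<noteq> j0" using jj insert.hyps(2) by auto
    then have "B j i0 = 0" using F2[of j] jj by simp
    then have "(\<Sum>i\<in>I'. B j i * B j' i) = (\<Sum>i\<in>I. B j i * B j' i)" using I' by simp
    also have "\<dots> = (if j = j' then 1 else 0)" using nB orth jj by simp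
    finally show "(\<Sum>i\<in>I'. B j i * B j' i) = (if j = j' then 1 else 0)" .
  qed
  define F where "F = (\<lambda>u. g (\<lambda>j\<in>insert j0 J. \<Sum>i\<in>I. B j i * u i))"
  have Fm: "F \<in> borel_measurable (PiM I (\<lambda>_. borel))"
    unfolding F_def using g by measurable
  define h where "h = (\<lambda>w. \<integral>\<^sup>+y. g (w(j0 := y)) \<partial>stdN)"
  have hm: "h \<in> borel_measurable (PiM J (\<lambda>_. borel))" unfolding h_def by (rule upd_nn_meas[OF g])
  have sG: "sets (PiM (insert i0 I') (\<lambda>_. stdN)) = sets (PiM I (\<lambda>_. borel))"
    unfolding I'(3) by (intro sets_PiM_cong) auto
  have FmG: "F \<in> borel_measurable (PiM (insert i0 I') (\<lambda>_. stdN))"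
    using sG Fm by (simp cong: measurable_cong_sets)
  have sGJ: "sets (PiM (insert j0 J) (\<lambda>_. stdN)) = sets (PiM (insert j0 J) (\<lambda>_. borel))"
    by (intro sets_PiM_cong) auto
  have gG: "g \<in> borel_measurable (PiM (insert j0 J) (\<lambda>_. stdN))"
    using sGJ g by (simp cong: measurable_cong_sets)
  have "(\<integral>\<^sup>+z. g (\<lambda>j\<in>insert j0 J. \<Sum>i\<in>I. A j i * z i) \<partial>GI I) = (\<integral>\<^sup>+z. F (Q z) \<partial>GI I)"
  proof (rule nn_integral_cong)
    fix z assume "z \<in> space (GI I)"
    then have z: "z \<in> space (PiM I (\<lambda>_. borel::real measure))" by (simp add: space_GI space_PiM)
    show "g (\<lambda>j\<in>insert j0 J. \<Sum>i\<in>I. A j i * z i) = F (Q z)"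
      unfolding F_def using F1[OF z] by simp
  qed
  also have "\<dots> = (\<integral>\<^sup>+u. F u \<partial>GI I)"
    using bspec[OF conjunct2[OF Q(1)[unfolded GP_def]] Fm] by simp
  also have "\<dots> = (\<integral>\<^sup>+ x. (\<integral>\<^sup>+ y. F (x(i0 := y)) \<partial>stdN) \<partial>(PiM I' (\<lambda>_. stdN)))"
    unfolding GI_def I'(3) by (rule Gps.product_nn_integral_insert[OF I'(1,2) FmG])
  also have "\<dots> = (\<integral>\<^sup>+ x. h (\<lambda>j\<in>J. \<Sum>i\<in>I'. B j i * x i) \<partial>GI I')"
    unfolding GI_def
  proof (rule nn_integral_cong)
    fix x assume "x \<in> space (PiM I' (\<lambda>_. stdN))"
    then have x: "x \<in> space (PiM I' (\<lambda>_. borel::real measure))" by (simp add: space_PiM)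
    have e: "(\<lambda>j\<in>insert j0 J. \<Sum>i\<in>I. B j i * (x(i0 := y)) i) = (\<lambda>j\<in>J. \<Sum>i\<in>I'. B j i * x i)(j0 := y)" for y
    proof
      fix j show "(\<lambda>j\<in>insert j0 J. \<Sum>i\<in>I. B j i * (x(i0 := y)) i) j = ((\<lambda>j\<in>J. \<Sum>i\<in>I'. B j i * x i)(j0 := y)) j"
      proof (cases "j = j0")
        case True
        have "(\<Sum>i\<in>I. B j0 i * (x(i0 := y)) i) = B j0 i0 * y + (\<Sum>i\<in>I'. B j0 i * x i)"
          using I' by (simp, intro sum.cong) auto
        also have "\<dots> = y" using F2[of j0] F3 by simp
        finally show ?thesis using True by simp
      next
        case False
        show ?thesis
        proof (cases "j \<in> J")
          case True
          have "(\<Sum>i\<in>I. B j i * (x(i0 := y)) i) = B j i0 * y + (\<Sum>i\<in>I'. B j i * x i)"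
            using I' by (simp, intro sum.cong) auto
          also have "\<dots> = (\<Sum>i\<in>I'. B j i * x i)" using F2[of j] False True by simp
          finally show ?thesis using False True by simp
        next
          case False2: False
          then show ?thesis using False by simp
        qed
      qed
    qed
    show "(\<integral>\<^sup>+ y. F (x(i0 := y)) \<partial>stdN) = h (\<lambda>j\<in>J. \<Sum>i\<in>I'. B j i * x i)"
      unfolding F_def h_def e ..
  qed
  also have "\<dots> = (\<integral>\<^sup>+w. h w \<partial>GI J)"
    by (rule insert.IH[OF I'(1) F4 hm])
  also have "\<dots> = (\<integral>\<^sup>+w. g w \<partial>GI (insert j0 J))"
    unfolding GI_def h_def by (rule Gps.product_nn_integral_insert[OF insert.hyps(1,2) gG, symmetric])
  finally show ?case .
qed

lemma sum_sq_expand: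
  fixes c u :: "'j \<Rightarrow> real"
  shows   "(\<Sum>j\<in>J. (c j + u j)\<^sup>2) = (\<Sum>j\<in>J. (c j)\<^sup>2) + 2 * (\<Sum>j\<in>J. c j * u j) + (\<Sum>j\<in>J. (u j)\<^sup>2)"
proof -
  have "(\<Sum>j\<in>J. (c j + u j)\<^sup>2) = (\<Sum>j\<in>J. (c j)\<^sup>2 + 2 * (c j * u j) + (u j)\<^sup>2)"
    by (rule sum.cong) (simp_all add: power2_sum mult.assoc)
  also have "\<dots> = (\<Sum>j\<in>J. (c j)\<^sup>2) + 2 * (\<Sum>j\<in>J. c j * u j) + (\<Sum>j\<in>J. (u j)\<^sup>2)"
    by (simp add: sum.distrib sum_distrib_left[symmetric])
  finally show ?thesis .
qed

lemma NClem:
  fixes J :: "'j set" and f :: "real \<Rightarrow> ennreal"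
  assumes J: "finite J" "j0 \<in> J" and f[measurable]: "f \<in> borel_measurable borel"
  shows "(\<integral>\<^sup>+w. f (\<Sum>j\<in>J. (b j + w j)\<^sup>2) \<partial>GI J)
       = (\<integral>\<^sup>+w. f (\<Sum>j\<in>J. ((if j = j0 then sqrt (\<Sum>k\<in>J. (b k)\<^sup>2) else 0) + w j)\<^sup>2) \<partial>GI J)"
proof -
  define r where "r = sqrt (\<Sum>k\<in>J. (b k)\<^sup>2)"
  define b' where "b' = (\<lambda>j. if j = j0 then r else 0)"
  have S0: "(\<Sum>k\<in>J. (b k)\<^sup>2) \<ge> 0" by (simp add: sum_nonneg)
  show ?thesis
  proof (cases "r = 0")
    case True
    then have "(\<Sum>k\<in>J. (b k)\<^sup>2) = 0" using S0 by (simp add: r_def)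
    then have b0: "\<forall>k\<in>J. b k = 0" using J(1) by (subst (asm) sum_nonneg_eq_0_iff) auto
    have "(\<Sum>j\<in>J. (b j + w j)\<^sup>2) = (\<Sum>j\<in>J. ((if j = j0 then r else 0) + w j)\<^sup>2)" for w
      using b0 True by (intro sum.cong) auto
    then show ?thesis unfolding r_def by simp
  next
    case False
    then have r0: "r > 0" using S0 by (simp add: r_def)
    have r2: "r\<^sup>2 = (\<Sum>k\<in>J. (b k)\<^sup>2)" using S0 by (simp add: r_def)
    define a where "a = (\<lambda>k. b k / r)"
    have "0 < r\<^sup>2" using r0 by simp
    then have Sne: "(\<Sum>k\<in>J. (b k)\<^sup>2) \<noteq> 0" using r2 by simp
    have na: "(\<Sum>k\<in>J. (a k)\<^sup>2) = 1"
      using Sne r2 by (simp add: a_def power_divide sum_divide_distrib[symmetric])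
    obtain Q where Q: "GP J Q" "ORTH J Q" "\<forall>x\<in>space (PiM J (\<lambda>_. borel::real measure)). Q x j0 = (\<Sum>k\<in>J. a k * x k)"
      using Rot[OF J na] by blast
    define F where "F = (\<lambda>u. f (\<Sum>j\<in>J. (b' j + u j)\<^sup>2))"
    have Fm: "F \<in> borel_measurable (PiM J (\<lambda>_. borel))" unfolding F_def b'_def using J by measurable
    have key: "(\<Sum>j\<in>J. (b' j + Q w j)\<^sup>2) = (\<Sum>j\<in>J. (b j + w j)\<^sup>2)" if w: "w \<in> space (PiM J (\<lambda>_. borel::real measure))" for w
    proof -
      have "(\<Sum>j\<in>J. (b' j)\<^sup>2) = (\<Sum>j\<in>J. if j = j0 then r\<^sup>2 else 0)" by (rule sum.cong) (auto simp: b'_def)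
      then have s1: "(\<Sum>j\<in>J. (b' j)\<^sup>2) = r\<^sup>2" using J by (simp add: sum.delta)
      have "(\<Sum>j\<in>J. b' j * Q w j) = (\<Sum>j\<in>J. if j = j0 then r * Q w j else 0)" by (rule sum.cong) (auto simp: b'_def)
      then have s2: "(\<Sum>j\<in>J. b' j * Q w j) = r * Q w j0" using J by (simp add: sum.delta)
      have s3: "Q w j0 = (\<Sum>k\<in>J. b k * w k) / r" using Q(3) w by (simp add: a_def sum_divide_distrib)
      have s4: "(\<Sum>j\<in>J. (Q w j)\<^sup>2) = (\<Sum>j\<in>J. (w j)\<^sup>2)" by (rule ORTH_norm[OF Q(2) w])
      have "(\<Sum>j\<in>J. (b' j + Q w j)\<^sup>2) = r\<^sup>2 + 2 * (r * Q w j0) + (\<Sum>j\<in>J. (w j)\<^sup>2)"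
        unfolding sum_sq_expand s1 s2 s4 ..
      also have "\<dots> = (\<Sum>k\<in>J. (b k)\<^sup>2) + 2 * (\<Sum>k\<in>J. b k * w k) + (\<Sum>j\<in>J. (w j)\<^sup>2)"
        unfolding s3 r2[symmetric] using r0 by simp
      also have "\<dots> = (\<Sum>j\<in>J. (b j + w j)\<^sup>2)" unfolding sum_sq_expand ..
      finally show ?thesis .
    qed
    have "(\<integral>\<^sup>+w. f (\<Sum>j\<in>J. (b j + w j)\<^sup>2) \<partial>GI J) = (\<integral>\<^sup>+w. F (Q w) \<partial>GI J)"
    proof (rule nn_integral_cong)
      fix w assume "w \<in> space (GI J)"
      then have w: "w \<in> space (PiM J (\<lambda>_. borel::real measure))" by (simp add: space_GI space_PiM)
      show "f (\<Sum>j\<in>J. (b j + w j)\<^sup>2) = F (Q w)" unfolding F_def key[OF w] ..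
    qed
    also have "\<dots> = (\<integral>\<^sup>+u. F u \<partial>GI J)"
      using bspec[OF conjunct2[OF Q(1)[unfolded GP_def]] Fm] by simp
    finally show ?thesis unfolding F_def b'_def r_def .
  qed
qed

lemma N1D:
  fixes h :: "real \<Rightarrow> ennreal"
  assumes s: "0 < \<sigma>" and h[measurable]: "h \<in> borel_measurable borel"
  shows "(\<integral>\<^sup>+y. h y \<partial>density lborel (normal_density \<mu> \<sigma>)) = (\<integral>\<^sup>+z. h (\<mu> + \<sigma> * z) \<partial>stdN)"
proof -
  have pw: "\<sigma> * normal_density \<mu> \<sigma> (\<mu> + \<sigma> * z) = std_normal_density z" for z
  proof -
    have q: "sqrt (2 * pi * \<sigma>\<^sup>2) = sqrt (2 * pi) * \<sigma>" using s by (simp add: real_sqrt_mult)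
    have e0: "(\<mu> + \<sigma> * z - \<mu>)\<^sup>2 = \<sigma>\<^sup>2 * z\<^sup>2" by (simp add: power_mult_distrib)
    have e: "(\<mu> + \<sigma> * z - \<mu>)\<^sup>2 / (2 * \<sigma>\<^sup>2) = z\<^sup>2 / 2" unfolding e0 using s by (simp add: field_simps)
    show ?thesis unfolding normal_density_def q using s by (simp add: power_mult_distrib)
  qed
  have "(\<integral>\<^sup>+y. h y \<partial>density lborel (normal_density \<mu> \<sigma>)) = (\<integral>\<^sup>+y. ennreal (normal_density \<mu> \<sigma> y) * h y \<partial>lborel)"
    by (rule nn_integral_density) auto
  also have "\<dots> = ennreal \<bar>\<sigma>\<bar> * (\<integral>\<^sup>+z. ennreal (normal_density \<mu> \<sigma> (\<mu> + \<sigma> * z)) * h (\<mu> + \<sigma> * z) \<partial>lborel)"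
    by (rule nn_integral_real_affine) (use s in auto)
  also have "\<dots> = (\<integral>\<^sup>+z. ennreal \<sigma> * (ennreal (normal_density \<mu> \<sigma> (\<mu> + \<sigma> * z)) * h (\<mu> + \<sigma> * z)) \<partial>lborel)"
    using s by (subst nn_integral_cmult) auto
  also have "\<dots> = (\<integral>\<^sup>+z. ennreal (std_normal_density z) * h (\<mu> + \<sigma> * z) \<partial>lborel)"
    by (rule nn_integral_cong) (simp add: mult.assoc[symmetric] ennreal_mult'[symmetric] s less_imp_le pw)
  also have "\<dots> = (\<integral>\<^sup>+z. h (\<mu> + \<sigma> * z) \<partial>stdN)"
    by (rule nn_integral_density[symmetric]) auto
  finally show ?thesis .
qed

lemma Y_transfer:
  fixes I :: "'i set" and m :: "'i \<Rightarrow> real" and f :: "('i \<Rightarrow> real) \<Rightarrow> ennreal"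
  assumes s: "0 < \<sigma>" and "finite I" and "f \<in> borel_measurable (PiM I (\<lambda>_. borel))"
  shows "(\<integral>\<^sup>+y. f y \<partial>PiM I (\<lambda>r. density lborel (normal_density (m r) \<sigma>)))
       = (\<integral>\<^sup>+z. f (\<lambda>r\<in>I. m r + \<sigma> * z r) \<partial>GI I)"
  using assms(2,3)
proof (induction I arbitrary: f rule: finite_induct)
  case empty
  show ?case unfolding GI_def PiM_empty by (simp add: restrict_def nn_integral_count_space_finite)
next
  case (insert i I)
  note f = insert.prems
  interpret NPS: product_sigma_finite "\<lambda>r. density lborel (normal_density (m r) \<sigma>)"
    unfolding product_sigma_finite_def using prob_space_normal_density[OF s] prob_space_imp_sigma_finite by blast
  have sN: "sets (PiM (insert i I) (\<lambda>r. density lborel (normal_density (m r) \<sigma>))) = sets (PiM (insert i I) (\<lambda>_. borel))"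
    by (intro sets_PiM_cong) auto
  have fN: "f \<in> borel_measurable (PiM (insert i I) (\<lambda>r. density lborel (normal_density (m r) \<sigma>)))"
    using sN f by (simp cong: measurable_cong_sets)
  have sG: "sets (PiM (insert i I) (\<lambda>_. stdN)) = sets (PiM (insert i I) (\<lambda>_. borel))"
    by (intro sets_PiM_cong) auto
  have fT: "(\<lambda>z. f (\<lambda>r\<in>insert i I. m r + \<sigma> * z r)) \<in> borel_measurable (PiM (insert i I) (\<lambda>_. stdN))"
  proof -
    have "(\<lambda>z. f (\<lambda>r\<in>insert i I. m r + \<sigma> * z r)) \<in> borel_measurable (PiM (insert i I) (\<lambda>_. borel))"
      using f by measurable
    then show ?thesis using sG by (simp cong: measurable_cong_sets)
  qed
  define g' where "g' = (\<lambda>w. f (\<lambda>k\<in>insert i I. if k = i then m i + \<sigma> * w k else w k))"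
  have g'm: "g' \<in> borel_measurable (PiM (insert i I) (\<lambda>_. borel))" unfolding g'_def using f by measurable
  define h where "h = (\<lambda>x. \<integral>\<^sup>+z. g' (x(i := z)) \<partial>stdN)"
  have hm: "h \<in> borel_measurable (PiM I (\<lambda>_. borel))" unfolding h_def by (rule upd_nn_meas[OF g'm])
  have g'x: "g' (x(i := z)) = f (x(i := m i + \<sigma> * z))" if x: "x \<in> space (PiM I (\<lambda>_. borel::real measure))" for x z
  proof -
    have "(\<lambda>k\<in>insert i I. if k = i then m i + \<sigma> * (x(i := z)) k else (x(i := z)) k) = x(i := m i + \<sigma> * z)"
      using x insert.hyps(2) by (auto simp: space_PiM PiE_def extensional_def fun_eq_iff)
    then show ?thesis by (simp add: g'_def)
  qed
  have "(\<integral>\<^sup>+y. f y \<partial>PiM (insert i I) (\<lambda>r. density lborel (normal_density (m r) \<sigma>)))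
      = (\<integral>\<^sup>+ x. (\<integral>\<^sup>+ y. f (x(i := y)) \<partial>density lborel (normal_density (m i) \<sigma>)) \<partial>PiM I (\<lambda>r. density lborel (normal_density (m r) \<sigma>)))"
    by (rule NPS.product_nn_integral_insert[OF insert.hyps fN])
  also have "\<dots> = (\<integral>\<^sup>+ x. h x \<partial>PiM I (\<lambda>r. density lborel (normal_density (m r) \<sigma>)))"
  proof (rule nn_integral_cong)
    fix x assume "x \<in> space (PiM I (\<lambda>r. density lborel (normal_density (m r) \<sigma>)))"
    then have x: "x \<in> space (PiM I (\<lambda>_. borel::real measure))" by (simp add: space_PiM)
    have fx: "(\<lambda>y. f (x(i := y))) \<in> borel_measurable borel"
      using measurable_comp[OF measurable_component_update[OF x insert.hyps(2)] f] by (simp add: comp_def)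
    show "(\<integral>\<^sup>+ y. f (x(i := y)) \<partial>density lborel (normal_density (m i) \<sigma>)) = h x"
      unfolding h_def g'x[OF x] by (rule N1D[OF s fx])
  qed
  also have "\<dots> = (\<integral>\<^sup>+z. h (\<lambda>r\<in>I. m r + \<sigma> * z r) \<partial>GI I)"
    by (rule insert.IH[OF hm])
  also have "\<dots> = (\<integral>\<^sup>+ x. (\<integral>\<^sup>+ y. f (\<lambda>r\<in>insert i I. m r + \<sigma> * (x(i := y)) r) \<partial>stdN) \<partial>PiM I (\<lambda>_. stdN))"
    unfolding GI_def
  proof (rule nn_integral_cong)
    fix x assume "x \<in> space (PiM I (\<lambda>_. stdN))"
    have rx: "(\<lambda>r\<in>I. m r + \<sigma> * x r) \<in> space (PiM I (\<lambda>_. borel::real measure))" by (simp add: space_PiM)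
    have e: "(\<lambda>r\<in>I. m r + \<sigma> * x r)(i := m i + \<sigma> * y) = (\<lambda>r\<in>insert i I. m r + \<sigma> * (x(i := y)) r)" for y
      using insert.hyps(2) by (auto simp: fun_eq_iff)
    show "h (\<lambda>r\<in>I. m r + \<sigma> * x r) = (\<integral>\<^sup>+ y. f (\<lambda>r\<in>insert i I. m r + \<sigma> * (x(i := y)) r) \<partial>stdN)"
      unfolding h_def g'x[OF rx] e ..
  qed
  also have "\<dots> = (\<integral>\<^sup>+z. f (\<lambda>r\<in>insert i I. m r + \<sigma> * z r) \<partial>GI (insert i I))"
    unfolding GI_def by (rule Gps.product_nn_integral_insert[OF insert.hyps fT, symmetric])
  finally show ?case .
qed

lemma sqrt_le_iff_sq: assumes "0 \<le> y" shows "sqrt x \<le> y \<longleftrightarrow> x \<le> y\<^sup>2"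
proof
  assume "sqrt x \<le> y" then show "x \<le> y\<^sup>2" by (rule sqrt_le_D)
next
  assume "x \<le> y\<^sup>2"
  then have "sqrt x \<le> sqrt (y\<^sup>2)" by (rule real_sqrt_le_mono)
  then show "sqrt x \<le> y" using assms by simp
qed

lemma event_eq:
  fixes g s2 N K s :: real
  assumes g: "0 < g" and s2: "0 < s2" and N: "0 < N" and K: "0 \<le> K" and s: "0 \<le> s"
  shows "(max 0 (1 / (4 * g) * (sqrt (K\<^sup>2 + 8 * g * s) - (K + 4 * s2 * g / N))) = 0)
     \<longleftrightarrow> s * N / s2 \<le> K + 2 * g * s2 / N"
proof -
  define R where "R = K + 4 * s2 * g / N"
  have R0: "0 \<le> R" unfolding R_def using g s2 N K by (simp add: add_nonneg_nonneg)
  have "(max 0 (1 / (4 * g) * (sqrt (K\<^sup>2 + 8 * g * s) - R)) = 0) \<longleftrightarrow> 1 / (4 * g) * (sqrt (K\<^sup>2 + 8 * g * s) - R) \<le> 0"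
    by (simp add: max_def)
  also have "\<dots> \<longleftrightarrow> sqrt (K\<^sup>2 + 8 * g * s) \<le> R"
    using g by (simp add: divide_le_0_iff)
  also have "\<dots> \<longleftrightarrow> K\<^sup>2 + 8 * g * s \<le> R\<^sup>2" by (rule sqrt_le_iff_sq[OF R0])
  also have "R\<^sup>2 = K\<^sup>2 + 8 * g * (K * s2 / N + 2 * g * s2 * s2 / (N * N))"
    unfolding R_def using N by (simp add: power2_eq_square field_simps)
  also have "(K\<^sup>2 + 8 * g * s \<le> K\<^sup>2 + 8 * g * (K * s2 / N + 2 * g * s2 * s2 / (N * N))) \<longleftrightarrow> s \<le> K * s2 / N + 2 * g * s2 * s2 / (N * N)"
    using g by simp
  also have "\<dots> \<longleftrightarrow> s * N / s2 \<le> K + 2 * g * s2 / N"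
  proof -
    have "s \<le> K * s2 / N + 2 * g * s2 * s2 / (N * N) \<longleftrightarrow> s * (N / s2) \<le> (K * s2 / N + 2 * g * s2 * s2 / (N * N)) * (N / s2)"
      using N s2 by (intro mult_le_cancel_right_pos[symmetric]) simp
    also have "(K * s2 / N + 2 * g * s2 * s2 / (N * N)) * (N / s2) = K + 2 * g * s2 / N"
      using N s2 by (simp add: field_simps)
    finally show ?thesis by simp
  qed
  finally show ?thesis unfolding R_def .
qed

lemma blk_finite: "finite (blk_idx p k)" unfolding blk_idx_def by auto

lemma G_Gtheta:
  fixes n p :: nat and k :: "nat \<Rightarrow> nat" and G :: "nat \<Rightarrow> nat \<Rightarrow> nat \<Rightarrow> real"
  assumes orth: "\<forall>i<p. \<forall>i'<p. \<forall>j<k i. \<forall>j'<k i'.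
                 (\<Sum>r<n. G i r j * G i' r j') = (if i = i' \<and> j = j' then real n else 0)"
    and ij: "i < p" "j < k i"
  shows "(\<Sum>r<n. G i r j * Gtheta G p k th r) = real n * th (i, j)"
proof -
  let ?B = "blk_idx p k"
  have "(\<Sum>r<n. G i r j * Gtheta G p k th r) = (\<Sum>r<n. \<Sum>q\<in>?B. G i r j * (G (fst q) r (snd q) * th q))"
    unfolding Gtheta_def by (simp add: sum_distrib_left case_prod_beta)
  also have "\<dots> = (\<Sum>q\<in>?B. \<Sum>r<n. G i r j * (G (fst q) r (snd q) * th q))"
    by (rule sum.swap)
  also have "\<dots> = (\<Sum>q\<in>?B. th q * (\<Sum>r<n. G i r j * G (fst q) r (snd q)))"
    by (rule sum.cong) (simp_all add: sum_distrib_left algebra_simps)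
  also have "\<dots> = (\<Sum>q\<in>?B. if q = (i, j) then real n * th q else 0)"
  proof (rule sum.cong)
    fix q assume q: "q \<in> ?B"
    then have "fst q < p" "snd q < k (fst q)" by (auto simp: blk_idx_def)
    then have "(\<Sum>r<n. G i r j * G (fst q) r (snd q)) = (if i = fst q \<and> j = snd q then real n else 0)"
      using orth ij by blast
    then show "th q * (\<Sum>r<n. G i r j * G (fst q) r (snd q)) = (if q = (i, j) then real n * th q else 0)"
      by (cases q) auto
  qed simp
  also have "\<dots> = real n * th (i, j)"
    using ij blk_finite[of p k] by (simp add: sum.delta' blk_idx_def)
  finally show ?thesis .
qed

lemma LS_transform:
  fixes n p :: nat and k :: "nat \<Rightarrow> nat" and G :: "nat \<Rightarrow> nat \<Rightarrow> nat \<Rightarrow> real" and sigma2 :: real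
  assumes n_pos: "0 < n"
    and orth: "\<forall>i<p. \<forall>i'<p. \<forall>j<k i. \<forall>j'<k i'.
                 (\<Sum>r<n. G i r j * G i' r j') = (if i = i' \<and> j = j' then real n else 0)"
    and i: "i < p" and s2: "0 < sigma2"
  shows "normsq_LS n G k (\<lambda>r\<in>{..<n}. Gtheta G p k thbar r + sqrt sigma2 * z r) i * real n / sigma2
       = (\<Sum>j<k i. (sqrt (real n) * thbar (i, j) / sqrt sigma2 + (\<Sum>r<n. (G i r j / sqrt (real n)) * z r))\<^sup>2)"
proof -
  define \<sigma> where "\<sigma> = sqrt sigma2"
  define q where "q = sqrt (real n)"
  have sp: "0 < \<sigma>" using s2 by (simp add: \<sigma>_def)
  have qp: "0 < q" using n_pos by (simp add: q_def)
  have s2e: "sigma2 = \<sigma>\<^sup>2" using s2 by (simp add: \<sigma>_def)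
  have ne: "real n = q\<^sup>2" by (simp add: q_def)
  have tl: "theta_LS n G (\<lambda>r\<in>{..<n}. Gtheta G p k thbar r + \<sigma> * z r) i j = thbar (i, j) + \<sigma> / real n * (\<Sum>r<n. G i r j * z r)"
    if j: "j < k i" for j
  proof -
    have "(\<Sum>r<n. G i r j * (\<lambda>r\<in>{..<n}. Gtheta G p k thbar r + \<sigma> * z r) r) = (\<Sum>r<n. G i r j * Gtheta G p k thbar r) + \<sigma> * (\<Sum>r<n. G i r j * z r)"
      by (simp add: sum.distrib sum_distrib_left algebra_simps)
    also have "\<dots> = real n * thbar (i, j) + \<sigma> * (\<Sum>r<n. G i r j * z r)"
      using G_Gtheta[OF orth i j] by simp
    finally show ?thesis unfolding theta_LS_def using n_pos by (simp add: field_simps)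
  qed
  have "normsq_LS n G k (\<lambda>r\<in>{..<n}. Gtheta G p k thbar r + \<sigma> * z r) i * real n / sigma2
      = (\<Sum>j<k i. (thbar (i, j) + \<sigma> / real n * (\<Sum>r<n. G i r j * z r))\<^sup>2 * real n / sigma2)"
    unfolding normsq_LS_def by (simp add: tl sum_distrib_right sum_divide_distrib)
  also have "\<dots> = (\<Sum>j<k i. (q * thbar (i, j) / \<sigma> + (\<Sum>r<n. (G i r j / q) * z r))\<^sup>2)"
  proof (rule sum.cong)
    fix j
    define a where "a = thbar (i, j)"
    define S where "S = (\<Sum>r<n. G i r j * z r)"
    have S': "(\<Sum>r<n. (G i r j / q) * z r) = S / q" unfolding S_def by (simp add: sum_divide_distrib)
    show "(thbar (i, j) + \<sigma> / real n * (\<Sum>r<n. G i r j * z r))\<^sup>2 * real n / sigma2 = (q * thbar (i, j) / \<sigma> + (\<Sum>r<n. (G i r j / q) * z r))\<^sup>2"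
      unfolding S' a_def[symmetric] S_def[symmetric] s2e ne using sp qp
      by (simp add: field_simps power2_eq_square)
  qed simp
  finally show ?thesis unfolding \<sigma>_def q_def .
qed

lemma measure_nn: "A \<in> sets M \<Longrightarrow> measure M A = enn2real (\<integral>\<^sup>+x. indicator A x \<partial>M)"
  by (simp add: measure_def)

lemma part3:
  fixes n p :: nat and k :: "nat \<Rightarrow> nat" and G :: "nat \<Rightarrow> nat \<Rightarrow> nat \<Rightarrow> real"
    and sigma2 :: real
  assumes n_pos: "0 < n"
    and k_pos: "\<forall>i<p. 0 < k i"
    and orth: "\<forall>i<p. \<forall>i'<p. \<forall>j<k i. \<forall>j'<k i'.
                 (\<Sum>r<n. G i r j * G i' r j') = (if i = i' \<and> j = j' then real n else 0)"
    and sigma2_pos: "0 < sigma2"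
  shows "\<forall>gamma>0. \<forall>thbar. \<forall>i<p.
            measure (y_given_theta n G p k sigma2 thbar)
              {y \<in> space (y_given_theta n G p k sigma2 thbar). lamhat n G p k sigma2 gamma y i = 0}
            = measure (nc_chi2 (k i) ((\<Sum>j<k i. (thbar (i,j))\<^sup>2) * real n / sigma2))
                {..real (k i) + 2 * gamma * sigma2 / real n}"
proof (intro allI impI)
  fix gamma :: real and thbar i assume gp: "0 < gamma" and i: "i < p"
  define K where "K = k i"
  have K0: "0 < K" using k_pos i by (simp add: K_def)
  define \<sigma> where "\<sigma> = sqrt sigma2"
  have sp: "0 < \<sigma>" using sigma2_pos by (simp add: \<sigma>_def)
  define m where "m = Gtheta G p k thbar"
  define c where "c = real K + 2 * gamma * sigma2 / real n"
  define Y where "Y = y_given_theta n G p k sigma2 thbar"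
  have Ydef: "Y = PiM {..<n} (\<lambda>r. density lborel (normal_density (m r) \<sigma>))"
    by (simp add: Y_def y_given_theta_def m_def \<sigma>_def)
  define \<Phi> where "\<Phi> = (\<lambda>y. normsq_LS n G k y i * real n / sigma2)"
  have \<Phi>m: "\<Phi> \<in> borel_measurable (PiM {..<n} (\<lambda>_. borel))"
    unfolding \<Phi>_def normsq_LS_def theta_LS_def by measurable
  have sY: "sets Y = sets (PiM {..<n} (\<lambda>_. borel))" unfolding Ydef by (intro sets_PiM_cong) auto
  have \<Phi>mY: "\<Phi> \<in> borel_measurable Y" using \<Phi>m sY by (simp cong: measurable_cong_sets)
  have Ev: "lamhat n G p k sigma2 gamma y i = 0 \<longleftrightarrow> \<Phi> y \<le> c" for y
  proof -
    have s0: "0 \<le> normsq_LS n G k y i" unfolding normsq_LS_def by (simp add: sum_nonneg)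
    show ?thesis
      unfolding lamhat_def \<Phi>_def c_def K_def using i
      using event_eq[OF gp sigma2_pos _ _ s0, of "real n" "real (k i)"] n_pos by simp
  qed
  define E where "E = {y \<in> space Y. \<Phi> y \<le> c}"
  have EY: "E \<in> sets Y" unfolding E_def using \<Phi>mY by measurable
  define f where "f = (\<lambda>y. indicator {..c} (\<Phi> y) :: ennreal)"
  have fm: "f \<in> borel_measurable (PiM {..<n} (\<lambda>_. borel))" unfolding f_def using \<Phi>m by measurable
  define A where "A = (\<lambda>j r. G i r j / sqrt (real n))"
  define b where "b = (\<lambda>j. sqrt (real n) * thbar (i, j) / \<sigma>)"
  define g where "g = (\<lambda>w. indicator {..c} (\<Sum>j<K. (b j + w j)\<^sup>2) :: ennreal)"
  have gm: "g \<in> borel_measurable (PiM {..<K} (\<lambda>_. borel))" unfolding g_def by measurable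
  have Aorth: "\<forall>j\<in>{..<K}. \<forall>j'\<in>{..<K}. (\<Sum>r\<in>{..<n}. A j r * A j' r) = (if j = j' then 1 else 0)"
  proof (intro ballI)
    fix j j' assume "j \<in> {..<K}" "j' \<in> {..<K}"
    then have "(\<Sum>r<n. G i r j * G i r j') = (if j = j' then real n else 0)"
      using orth i by (auto simp: K_def)
    moreover have "(\<Sum>r\<in>{..<n}. A j r * A j' r) = (\<Sum>r<n. G i r j * G i r j') / real n"
      unfolding A_def by (simp add: sum_divide_distrib)
    ultimately show "(\<Sum>r\<in>{..<n}. A j r * A j' r) = (if j = j' then 1 else 0)" using n_pos by simp
  qed
  have "emeasure Y {y \<in> space Y. lamhat n G p k sigma2 gamma y i = 0} = emeasure Y E"
    unfolding E_def Ev ..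
  also have "\<dots> = (\<integral>\<^sup>+y. indicator E y \<partial>Y)" using EY by simp
  also have "\<dots> = (\<integral>\<^sup>+y. f y \<partial>Y)"
    by (rule nn_integral_cong) (auto simp: E_def f_def indicator_def)
  also have "\<dots> = (\<integral>\<^sup>+z. f (\<lambda>r\<in>{..<n}. m r + \<sigma> * z r) \<partial>GI {..<n})"
    unfolding Ydef by (rule Y_transfer[OF sp _ fm]) simp
  also have "\<dots> = (\<integral>\<^sup>+z. g (\<lambda>j\<in>{..<K}. \<Sum>r\<in>{..<n}. A j r * z r) \<partial>GI {..<n})"
  proof (rule nn_integral_cong)
    fix z :: "nat \<Rightarrow> real"
    have "\<Phi> (\<lambda>r\<in>{..<n}. m r + \<sigma> * z r) = (\<Sum>j<K. (b j + (\<Sum>r<n. A j r * z r))\<^sup>2)"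
      unfolding \<Phi>_def m_def \<sigma>_def b_def A_def K_def
      by (rule LS_transform[OF n_pos orth i sigma2_pos])
    also have "\<dots> = (\<Sum>j<K. (b j + (\<lambda>j\<in>{..<K}. \<Sum>r\<in>{..<n}. A j r * z r) j)\<^sup>2)"
      by (rule sum.cong) auto
    finally show "f (\<lambda>r\<in>{..<n}. m r + \<sigma> * z r) = g (\<lambda>j\<in>{..<K}. \<Sum>r\<in>{..<n}. A j r * z r)"
      unfolding f_def g_def by simp
  qed
  also have "\<dots> = (\<integral>\<^sup>+w. g w \<partial>GI {..<K})"
    by (rule Tlem[OF _ _ Aorth gm]) simp_all
  also have "\<dots> = (\<integral>\<^sup>+w. indicator {..c} (\<Sum>j\<in>{..<K}. ((if j = 0 then sqrt (\<Sum>k\<in>{..<K}. (b k)\<^sup>2) else 0) + w j)\<^sup>2) \<partial>GI {..<K})"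
    unfolding g_def by (rule NClem) (use K0 in auto)
  finally have L: "emeasure Y {y \<in> space Y. lamhat n G p k sigma2 gamma y i = 0} =
      (\<integral>\<^sup>+w. indicator {..c} (\<Sum>j\<in>{..<K}. ((if j = 0 then sqrt (\<Sum>k\<in>{..<K}. (b k)\<^sup>2) else 0) + w j)\<^sup>2) \<partial>GI {..<K})" .
  define \<mu> where "\<mu> = (\<Sum>j<k i. (thbar (i,j))\<^sup>2) * real n / sigma2"
  have bmu: "(\<Sum>k\<in>{..<K}. (b k)\<^sup>2) = \<mu>"
  proof -
    have "(\<Sum>k\<in>{..<K}. (b k)\<^sup>2) = (\<Sum>j<K. (thbar (i, j))\<^sup>2 * real n / sigma2)"
      by (rule sum.cong) (use sp in \<open>simp_all add: b_def power_mult_distrib power_divide \<sigma>_def sigma2_pos less_imp_le\<close>)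
    then show ?thesis by (simp add: \<mu>_def K_def sum_distrib_right sum_divide_distrib)
  qed
  define \<psi> where "\<psi> = (\<lambda>z::nat\<Rightarrow>real. \<Sum>j<K. (z j + (if j = 0 then sqrt \<mu> else 0))\<^sup>2)"
  have \<psi>m: "\<psi> \<in> borel_measurable (GI {..<K})"
  proof -
    have "\<psi> \<in> borel_measurable (PiM {..<K} (\<lambda>_. borel))" unfolding \<psi>_def by measurable
    then show ?thesis by (simp add: sets_GI cong: measurable_cong_sets)
  qed
  have nc: "nc_chi2 (k i) \<mu> = distr (GI {..<K}) borel \<psi>"
    unfolding nc_chi2_def GI_def \<psi>_def K_def ..
  have "measure (nc_chi2 (k i) \<mu>) {..c} = measure (GI {..<K}) (\<psi> -` {..c} \<inter> space (GI {..<K}))"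
    unfolding nc by (rule measure_distr[OF \<psi>m]) simp
  also have "\<dots> = enn2real (\<integral>\<^sup>+w. indicator (\<psi> -` {..c} \<inter> space (GI {..<K})) w \<partial>GI {..<K})"
    by (rule measure_nn) (use \<psi>m in measurable)
  also have "(\<integral>\<^sup>+w. indicator (\<psi> -` {..c} \<inter> space (GI {..<K})) w \<partial>GI {..<K})
      = (\<integral>\<^sup>+w. indicator {..c} (\<Sum>j\<in>{..<K}. ((if j = 0 then sqrt (\<Sum>k\<in>{..<K}. (b k)\<^sup>2) else 0) + w j)\<^sup>2) \<partial>GI {..<K})"
  proof (rule nn_integral_cong)
    fix w :: "nat \<Rightarrow> real" assume "w \<in> space (GI {..<K})"
    have "\<psi> w = (\<Sum>j\<in>{..<K}. ((if j = 0 then sqrt (\<Sum>k\<in>{..<K}. (b k)\<^sup>2) else 0) + w j)\<^sup>2)"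
      unfolding \<psi>_def bmu by (rule sum.cong) (simp_all add: add.commute)
    then show "indicator (\<psi> -` {..c} \<inter> space (GI {..<K})) w = indicator {..c} (\<Sum>j\<in>{..<K}. ((if j = 0 then sqrt (\<Sum>k\<in>{..<K}. (b k)\<^sup>2) else 0) + w j)\<^sup>2)"
      using \<open>w \<in> space (GI {..<K})\<close> by (simp add: indicator_def)
  qed
  finally have R: "measure (nc_chi2 (k i) \<mu>) {..c} = enn2real (emeasure Y {y \<in> space Y. lamhat n G p k sigma2 gamma y i = 0})"
    unfolding L .
  show "measure (y_given_theta n G p k sigma2 thbar)
              {y \<in> space (y_given_theta n G p k sigma2 thbar). lamhat n G p k sigma2 gamma y i = 0}
            = measure (nc_chi2 (k i) ((\<Sum>j<k i. (thbar (i,j))\<^sup>2) * real n / sigma2))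
                {..real (k i) + 2 * gamma * sigma2 / real n}"
    using R unfolding \<mu>_def c_def K_def Y_def by (simp add: measure_def)
qed

lemma lim_aux:
  fixes K s a :: real
  assumes K: "0 < K" and s: "0 \<le> s"
  shows "((\<lambda>g. max 0 (1 / (4 * g) * (sqrt (K\<^sup>2 + 8 * g * s) - (K + 4 * a * g)))) \<longlongrightarrow> max 0 (s / K - a)) (at_right 0)"
proof -
  define h where "h = (\<lambda>g::real. max 0 (2 * s / (sqrt (K\<^sup>2 + 8 * g * s) + K) - a))"
  have ev: "eventually (\<lambda>g. h g = max 0 (1 / (4 * g) * (sqrt (K\<^sup>2 + 8 * g * s) - (K + 4 * a * g)))) (at_right (0::real))"
  proof -
    have "eventually (\<lambda>g::real. 0 < g) (at_right 0)" by (simp add: eventually_at_filter)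
    then show ?thesis
    proof (rule eventually_mono)
      fix g :: real assume g: "0 < g"
      define D where "D = sqrt (K\<^sup>2 + 8 * g * s)"
      have D0: "0 \<le> D" unfolding D_def using g s K by simp
      have D2: "D\<^sup>2 = K\<^sup>2 + 8 * g * s" unfolding D_def using g s K by simp
      have DK: "0 < D + K" using D0 K by simp
      have "1 / (4 * g) * (D - (K + 4 * a * g)) = (D - K) / (4 * g) - a" using g by (simp add: field_simps)
      also have "(D - K) / (4 * g) = 2 * s / (D + K)"
      proof -
        have "(D - K) * (D + K) = 8 * g * s" using D2 by (simp add: power2_eq_square algebra_simps)
        then show ?thesis using g DK by (simp add: field_simps)
      qed
      finally show "h g = max 0 (1 / (4 * g) * (sqrt (K\<^sup>2 + 8 * g * s) - (K + 4 * a * g)))"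
        unfolding h_def D_def by simp
    qed
  qed
  have lim: "(h \<longlongrightarrow> h 0) (at_right 0)"
    unfolding h_def using K s
    by (intro tendsto_intros) (auto intro!: tendsto_eq_intros simp: add_pos_nonneg)
  have h0: "h 0 = max 0 (s / K - a)" unfolding h_def using K by simp
  show ?thesis using tendsto_cong[OF ev] lim h0 by simp
qed

lemma part2:
  fixes n p :: nat and k :: "nat \<Rightarrow> nat" and G :: "nat \<Rightarrow> nat \<Rightarrow> nat \<Rightarrow> real" and sigma2 :: real
  assumes n_pos: "0 < n" and k_pos: "\<forall>i<p. 0 < k i"
  shows "\<forall>y. \<forall>i<p. ((\<lambda>gamma. lamhat n G p k sigma2 gamma y i) \<longlongrightarrow>
              max 0 (normsq_LS n G k y i / real (k i) - sigma2 / real n)) (at_right 0)"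
proof (intro allI impI)
  fix y i assume i: "i < p"
  have K: "0 < real (k i)" using k_pos i by simp
  have s: "0 \<le> normsq_LS n G k y i" unfolding normsq_LS_def by (simp add: sum_nonneg)
  have e: "lamhat n G p k sigma2 g y i = max 0 (1 / (4 * g) * (sqrt ((real (k i))\<^sup>2 + 8 * g * normsq_LS n G k y i) - (real (k i) + 4 * (sigma2 / real n) * g)))" for g
    unfolding lamhat_def using i by (simp add: mult.commute mult.left_commute)
  show "((\<lambda>gamma. lamhat n G p k sigma2 gamma y i) \<longlongrightarrow> max 0 (normsq_LS n G k y i / real (k i) - sigma2 / real n)) (at_right 0)"
    unfolding e by (rule lim_aux[OF K s])
qed

lemma prob_gauss: "prob_space (gauss_meas v)"
  unfolding gauss_meas_def
  by (auto intro: prob_space_normal_density prob_space_return)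

lemma sets_gauss[measurable_cong]: "sets (gauss_meas v) = sets borel"
  unfolding gauss_meas_def by auto

lemma gauss1:
  fixes a v t :: real
  assumes a: "0 < a" and v: "0 \<le> v"
  shows "(\<integral>\<theta>. exp (- (\<theta> - t)\<^sup>2 / (2 * a)) \<partial>gauss_meas v) = sqrt (a / (a + v)) * exp (- t\<^sup>2 / (2 * (a + v)))"
proof (cases "v = 0")
  case True
  then show ?thesis using a by (simp add: gauss_meas_def integral_return)
next
  case False
  then have v0: "0 < v" using v by simp
  have pw: "exp (- (\<theta> - t)\<^sup>2 / (2 * a)) = sqrt (2 * pi * a) * normal_density 0 (sqrt a) (t - \<theta>)" for \<theta>
  proof -
    have "(t - \<theta>)\<^sup>2 = (\<theta> - t)\<^sup>2" by (simp add: power2_commute)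
    moreover have "sqrt (2 * pi * a) > 0" using a by simp
    ultimately show ?thesis unfolding normal_density_def using a by simp
  qed
  have "(\<integral>\<theta>. exp (- (\<theta> - t)\<^sup>2 / (2 * a)) \<partial>gauss_meas v) = (\<integral>\<theta>. normal_density 0 (sqrt v) \<theta> * exp (- (\<theta> - t)\<^sup>2 / (2 * a)) \<partial>lborel)"
    unfolding gauss_meas_def using v0 by (simp add: integral_density)
  also have "\<dots> = enn2real (\<integral>\<^sup>+\<theta>. ennreal (normal_density 0 (sqrt v) \<theta> * exp (- (\<theta> - t)\<^sup>2 / (2 * a))) \<partial>lborel)"
    by (rule integral_eq_nn_integral) auto
  also have "(\<integral>\<^sup>+\<theta>. ennreal (normal_density 0 (sqrt v) \<theta> * exp (- (\<theta> - t)\<^sup>2 / (2 * a))) \<partial>lborel)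
      = (\<integral>\<^sup>+\<theta>. ennreal (sqrt (2 * pi * a)) * ennreal (normal_density 0 (sqrt a) (t - \<theta>) * normal_density 0 (sqrt v) \<theta>) \<partial>lborel)"
  proof (rule nn_integral_cong)
    fix \<theta> :: real
    have "normal_density 0 (sqrt v) \<theta> * exp (- (\<theta> - t)\<^sup>2 / (2 * a)) = sqrt (2 * pi * a) * (normal_density 0 (sqrt a) (t - \<theta>) * normal_density 0 (sqrt v) \<theta>)"
      by (subst pw) (simp add: mult_ac)
    then have "ennreal (normal_density 0 (sqrt v) \<theta> * exp (- (\<theta> - t)\<^sup>2 / (2 * a))) = ennreal (sqrt (2 * pi * a) * (normal_density 0 (sqrt a) (t - \<theta>) * normal_density 0 (sqrt v) \<theta>))"
      by (rule arg_cong)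
    also have "\<dots> = ennreal (sqrt (2 * pi * a)) * ennreal (normal_density 0 (sqrt a) (t - \<theta>) * normal_density 0 (sqrt v) \<theta>)"
      by (rule ennreal_mult) (use a in simp_all)
    finally show "ennreal (normal_density 0 (sqrt v) \<theta> * exp (- (\<theta> - t)\<^sup>2 / (2 * a))) = ennreal (sqrt (2 * pi * a)) * ennreal (normal_density 0 (sqrt a) (t - \<theta>) * normal_density 0 (sqrt v) \<theta>)" .
  qed
  also have "\<dots> = ennreal (sqrt (2 * pi * a)) * (\<integral>\<^sup>+\<theta>. ennreal (normal_density 0 (sqrt a) (t - \<theta>) * normal_density 0 (sqrt v) \<theta>) \<partial>lborel)"
    by (rule nn_integral_cmult) simp
  also have "(\<integral>\<^sup>+\<theta>. ennreal (normal_density 0 (sqrt a) (t - \<theta>) * normal_density 0 (sqrt v) \<theta>) \<partial>lborel) = normal_density 0 (sqrt ((sqrt a)\<^sup>2 + (sqrt v)\<^sup>2)) t"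
    using fun_cong[OF conv_normal_density_zero_mean[of "sqrt a" "sqrt v"], of t] a v0 by simp
  also have "sqrt ((sqrt a)\<^sup>2 + (sqrt v)\<^sup>2) = sqrt (a + v)" using a v by simp
  finally have "(\<integral>\<theta>. exp (- (\<theta> - t)\<^sup>2 / (2 * a)) \<partial>gauss_meas v) = sqrt (2 * pi * a) * normal_density 0 (sqrt (a + v)) t"
    using a by (simp add: enn2real_mult)
  also have "\<dots> = sqrt (a / (a + v)) * exp (- t\<^sup>2 / (2 * (a + v)))"
  proof -
    have av: "0 < a + v" using a v by simp
    have "sqrt (2 * pi * a) / sqrt (2 * pi * (a + v)) = sqrt (a / (a + v))"
      using av by (simp add: real_sqrt_divide[symmetric])
    moreover have "sqrt (2 * pi * a) * normal_density 0 (sqrt (a + v)) t = (sqrt (2 * pi * a) / sqrt (2 * pi * (a + v))) * exp (- t\<^sup>2 / (2 * (a + v)))"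
      unfolding normal_density_def using av by simp
    ultimately show ?thesis by simp
  qed
  finally show ?thesis .
qed

lemma Gtheta_alt: "Gtheta G p k th r = (\<Sum>q\<in>blk_idx p k. G (fst q) r (snd q) * th q)"
  unfolding Gtheta_def by (simp add: case_prod_beta)

lemma key_identity:
  fixes n p :: nat and k :: "nat \<Rightarrow> nat" and G :: "nat \<Rightarrow> nat \<Rightarrow> nat \<Rightarrow> real"
    and y :: "nat \<Rightarrow> real" and th :: "nat \<times> nat \<Rightarrow> real"
  assumes n_pos: "0 < n"
    and orth: "\<forall>i<p. \<forall>i'<p. \<forall>j<k i. \<forall>j'<k i'.
                 (\<Sum>r<n. G i r j * G i' r j') = (if i = i' \<and> j = j' then real n else 0)"
  defines "t \<equiv> (\<lambda>q. theta_LS n G y (fst q) (snd q))"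
  shows "(\<Sum>r<n. (y r - Gtheta G p k th r)\<^sup>2)
       = (\<Sum>r<n. (y r)\<^sup>2) - real n * (\<Sum>q\<in>blk_idx p k. (t q)\<^sup>2) + real n * (\<Sum>q\<in>blk_idx p k. (th q - t q)\<^sup>2)"
proof -
  let ?B = "blk_idx p k"
  have yG: "(\<Sum>r<n. y r * Gtheta G p k th r) = real n * (\<Sum>q\<in>?B. th q * t q)"
  proof -
    have "(\<Sum>r<n. y r * Gtheta G p k th r) = (\<Sum>r<n. \<Sum>q\<in>?B. th q * (G (fst q) r (snd q) * y r))"
      unfolding Gtheta_alt by (simp add: sum_distrib_left mult_ac)
    also have "\<dots> = (\<Sum>q\<in>?B. th q * (\<Sum>r<n. G (fst q) r (snd q) * y r))"
      by (subst sum.swap) (simp add: sum_distrib_left)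
    also have "\<dots> = (\<Sum>q\<in>?B. real n * (th q * t q))"
      by (rule sum.cong) (use n_pos in \<open>simp_all add: t_def theta_LS_def\<close>)
    finally show ?thesis by (simp add: sum_distrib_left)
  qed
  have GG: "(\<Sum>r<n. (Gtheta G p k th r)\<^sup>2) = real n * (\<Sum>q\<in>?B. (th q)\<^sup>2)"
  proof -
    have "(\<Sum>r<n. (Gtheta G p k th r)\<^sup>2) = (\<Sum>r<n. \<Sum>q\<in>?B. th q * (G (fst q) r (snd q) * Gtheta G p k th r))"
      unfolding power2_eq_square by (subst (2) Gtheta_alt) (simp add: sum_distrib_left sum_distrib_right mult_ac)
    also have "\<dots> = (\<Sum>q\<in>?B. th q * (\<Sum>r<n. G (fst q) r (snd q) * Gtheta G p k th r))"
      by (subst sum.swap) (simp add: sum_distrib_left)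
    also have "\<dots> = (\<Sum>q\<in>?B. real n * (th q)\<^sup>2)"
    proof (rule sum.cong)
      fix q assume q: "q \<in> ?B"
      then have "fst q < p" "snd q < k (fst q)" by (auto simp: blk_idx_def)
      then have "(\<Sum>r<n. G (fst q) r (snd q) * Gtheta G p k th r) = real n * th (fst q, snd q)"
        by (rule G_Gtheta[OF orth])
      then show "th q * (\<Sum>r<n. G (fst q) r (snd q) * Gtheta G p k th r) = real n * (th q)\<^sup>2"
        by (simp add: power2_eq_square)
    qed simp
    finally show ?thesis by (simp add: sum_distrib_left)
  qed
  have "(\<Sum>r<n. (y r - Gtheta G p k th r)\<^sup>2) = (\<Sum>r<n. (y r)\<^sup>2) - 2 * (\<Sum>r<n. y r * Gtheta G p k th r) + (\<Sum>r<n. (Gtheta G p k th r)\<^sup>2)"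
    by (simp add: power2_diff sum.distrib sum_subtractf sum_distrib_left mult.assoc)
  also have "\<dots> = (\<Sum>r<n. (y r)\<^sup>2) - 2 * (real n * (\<Sum>q\<in>?B. th q * t q)) + real n * (\<Sum>q\<in>?B. (th q)\<^sup>2)"
    unfolding yG GG ..
  also have "\<dots> = (\<Sum>r<n. (y r)\<^sup>2) - real n * (\<Sum>q\<in>?B. (t q)\<^sup>2) + real n * (\<Sum>q\<in>?B. (th q - t q)\<^sup>2)"
    by (simp add: power2_diff sum.distrib sum_subtractf sum_distrib_left algebra_simps)
  finally show ?thesis .
qed

lemma lik_factor:
  fixes n p :: nat and k :: "nat \<Rightarrow> nat" and G :: "nat \<Rightarrow> nat \<Rightarrow> nat \<Rightarrow> real"
    and y :: "nat \<Rightarrow> real" and th :: "nat \<times> nat \<Rightarrow> real" and sigma2 :: real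
  assumes n_pos: "0 < n"
    and orth: "\<forall>i<p. \<forall>i'<p. \<forall>j<k i. \<forall>j'<k i'.
                 (\<Sum>r<n. G i r j * G i' r j') = (if i = i' \<and> j = j' then real n else 0)"
    and s2: "0 < sigma2"
  defines "t \<equiv> (\<lambda>q. theta_LS n G y (fst q) (snd q))"
  shows "lik n G p k sigma2 y th = ((1 / sqrt (2 * pi * sigma2)) ^ n * exp (- ((\<Sum>r<n. (y r)\<^sup>2) - real n * (\<Sum>q\<in>blk_idx p k. (t q)\<^sup>2)) / (2 * sigma2)))
      * (\<Prod>q\<in>blk_idx p k. exp (- (th q - t q)\<^sup>2 / (2 * (sigma2 / real n))))"
proof -
  let ?B = "blk_idx p k"
  define A where "A = (\<Sum>r<n. (y r)\<^sup>2) - real n * (\<Sum>q\<in>?B. (t q)\<^sup>2)"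
  define S where "S = (\<Sum>q\<in>?B. (th q - t q)\<^sup>2)"
  have "lik n G p k sigma2 y th = (\<Prod>r<n. (1 / sqrt (2 * pi * sigma2)) * exp (- (y r - Gtheta G p k th r)\<^sup>2 / (2 * sigma2)))"
    unfolding lik_def by (rule prod.cong) (use s2 in \<open>simp_all add: normal_density_def\<close>)
  also have "\<dots> = (1 / sqrt (2 * pi * sigma2)) ^ n * (\<Prod>r<n. exp (- (y r - Gtheta G p k th r)\<^sup>2 / (2 * sigma2)))"
    by (rule trans[OF prod.distrib]) simp
  also have "(\<Prod>r<n. exp (- (y r - Gtheta G p k th r)\<^sup>2 / (2 * sigma2))) = exp (\<Sum>r<n. - (y r - Gtheta G p k th r)\<^sup>2 / (2 * sigma2))"
    by (rule exp_sum[symmetric]) simp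
  also have "(\<Sum>r<n. - (y r - Gtheta G p k th r)\<^sup>2 / (2 * sigma2)) = - (\<Sum>r<n. (y r - Gtheta G p k th r)\<^sup>2) / (2 * sigma2)"
    by (simp add: sum_divide_distrib sum_negf)
  also have "(\<Sum>r<n. (y r - Gtheta G p k th r)\<^sup>2) = A + real n * S"
    unfolding A_def S_def t_def by (rule key_identity[OF n_pos orth])
  also have "- (A + real n * S) / (2 * sigma2) = - A / (2 * sigma2) + (\<Sum>q\<in>?B. - (th q - t q)\<^sup>2 / (2 * (sigma2 / real n)))"
  proof -
    have e1: "- x / (2 * (sigma2 / real n)) = - x * (real n / (2 * sigma2))" for x
      using n_pos s2 by (simp add: field_simps)
    have "(\<Sum>q\<in>?B. - (th q - t q)\<^sup>2 / (2 * (sigma2 / real n))) = - S * (real n / (2 * sigma2))"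
      unfolding S_def e1 by (simp only: sum_distrib_right[symmetric] sum_negf)
    moreover have "- (A + real n * S) / (2 * sigma2) = - A / (2 * sigma2) + - S * (real n / (2 * sigma2))"
      using s2 by (simp add: field_simps)
    ultimately show ?thesis by simp
  qed
  also have "exp (- A / (2 * sigma2) + (\<Sum>q\<in>?B. - (th q - t q)\<^sup>2 / (2 * (sigma2 / real n))))
      = exp (- A / (2 * sigma2)) * (\<Prod>q\<in>?B. exp (- (th q - t q)\<^sup>2 / (2 * (sigma2 / real n))))"
    by (simp only: exp_add exp_sum[OF blk_finite])
  finally show ?thesis unfolding A_def by (simp add: mult.assoc)
qed

lemma marginal:
  fixes n p :: nat and k :: "nat \<Rightarrow> nat" and G :: "nat \<Rightarrow> nat \<Rightarrow> nat \<Rightarrow> real"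
    and y :: "nat \<Rightarrow> real" and lam :: "nat \<Rightarrow> real" and sigma2 :: real
  assumes n_pos: "0 < n"
    and orth: "\<forall>i<p. \<forall>i'<p. \<forall>j<k i. \<forall>j'<k i'.
                 (\<Sum>r<n. G i r j * G i' r j') = (if i = i' \<and> j = j' then real n else 0)"
    and s2: "0 < sigma2" and lam: "\<forall>i<p. 0 \<le> lam i"
  defines "t \<equiv> (\<lambda>q. theta_LS n G y (fst q) (snd q))" and "a \<equiv> sigma2 / real n"
  shows "(\<integral>th. lik n G p k sigma2 y th \<partial>prior_theta p k lam)
     = ((1 / sqrt (2 * pi * sigma2)) ^ n * exp (- ((\<Sum>r<n. (y r)\<^sup>2) - real n * (\<Sum>q\<in>blk_idx p k. (t q)\<^sup>2)) / (2 * sigma2)))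
      * (\<Prod>q\<in>blk_idx p k. sqrt (a / (a + lam (fst q))) * exp (- (t q)\<^sup>2 / (2 * (a + lam (fst q)))))"
proof -
  let ?B = "blk_idx p k"
  let ?C = "(1 / sqrt (2 * pi * sigma2)) ^ n * exp (- ((\<Sum>r<n. (y r)\<^sup>2) - real n * (\<Sum>q\<in>?B. (t q)\<^sup>2)) / (2 * sigma2))"
  have a0: "0 < a" unfolding a_def using n_pos s2 by simp
  interpret GPS: product_sigma_finite "\<lambda>q. gauss_meas (lam (fst q))"
    unfolding product_sigma_finite_def using prob_gauss prob_space_imp_sigma_finite by blast
  have pr: "prior_theta p k lam = PiM ?B (\<lambda>q. gauss_meas (lam (fst q)))"
    unfolding prior_theta_def by (simp add: case_prod_beta')
  have "(\<integral>th. lik n G p k sigma2 y th \<partial>prior_theta p k lam)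
      = (\<integral>th. ?C * (\<Prod>q\<in>?B. exp (- (th q - t q)\<^sup>2 / (2 * a))) \<partial>prior_theta p k lam)"
    unfolding t_def a_def by (rule Bochner_Integration.integral_cong[OF refl]) (rule lik_factor[OF n_pos orth s2])
  also have "\<dots> = ?C * (\<integral>th. (\<Prod>q\<in>?B. exp (- (th q - t q)\<^sup>2 / (2 * a))) \<partial>prior_theta p k lam)"
    by (rule integral_mult_right_zero)
  also have "(\<integral>th. (\<Prod>q\<in>?B. exp (- (th q - t q)\<^sup>2 / (2 * a))) \<partial>prior_theta p k lam)
      = (\<Prod>q\<in>?B. (\<integral>\<theta>. exp (- (\<theta> - t q)\<^sup>2 / (2 * a)) \<partial>gauss_meas (lam (fst q))))"
    unfolding pr
  proof (rule GPS.product_integral_prod[OF blk_finite])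
    fix q :: "nat \<times> nat" assume "q \<in> ?B"
    interpret P: prob_space "gauss_meas (lam (fst q))" by (rule prob_gauss)
    show "integrable (gauss_meas (lam (fst q))) (\<lambda>\<theta>. exp (- (\<theta> - t q)\<^sup>2 / (2 * a)))"
      by (rule P.integrable_const_bound[where B=1]) (use a0 in auto)
  qed
  also have "\<dots> = (\<Prod>q\<in>?B. sqrt (a / (a + lam (fst q))) * exp (- (t q)\<^sup>2 / (2 * (a + lam (fst q)))))"
  proof (rule prod.cong[OF refl])
    fix q :: "nat \<times> nat" assume "q \<in> ?B"
    then have "fst q < p" by (auto simp: blk_idx_def)
    then have "0 \<le> lam (fst q)" using lam by simp
    then show "(\<integral>\<theta>. exp (- (\<theta> - t q)\<^sup>2 / (2 * a)) \<partial>gauss_meas (lam (fst q))) = sqrt (a / (a + lam (fst q))) * exp (- (t q)\<^sup>2 / (2 * (a + lam (fst q))))"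
      by (rule gauss1[OF a0])
  qed
  finally show ?thesis .
qed

definition Ff :: "real \<Rightarrow> real \<Rightarrow> nat \<Rightarrow> real \<Rightarrow> real \<Rightarrow> real" where
  "Ff a g K S l = sqrt (a / (a + l)) ^ K * exp (- S / (2 * (a + l))) * exponential_density g l"

lemma post_factor:
  fixes n p :: nat and k :: "nat \<Rightarrow> nat" and G :: "nat \<Rightarrow> nat \<Rightarrow> nat \<Rightarrow> real"
    and y :: "nat \<Rightarrow> real" and lam :: "nat \<Rightarrow> real" and sigma2 gamma :: real
  assumes n_pos: "0 < n"
    and orth: "\<forall>i<p. \<forall>i'<p. \<forall>j<k i. \<forall>j'<k i'.
                 (\<Sum>r<n. G i r j * G i' r j') = (if i = i' \<and> j = j' then real n else 0)"
    and s2: "0 < sigma2" and lam: "\<forall>i<p. 0 \<le> lam i"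
  shows "post_obj n G p k sigma2 gamma y lam
     = ((1 / sqrt (2 * pi * sigma2)) ^ n * exp (- ((\<Sum>r<n. (y r)\<^sup>2) - real n * (\<Sum>q\<in>blk_idx p k. (theta_LS n G y (fst q) (snd q))\<^sup>2)) / (2 * sigma2)))
       * (\<Prod>i<p. Ff (sigma2 / real n) gamma (k i) (normsq_LS n G k y i) (lam i))"
proof -
  define a where "a = sigma2 / real n"
  define t where "t = (\<lambda>q. theta_LS n G y (fst q) (snd q))"
  let ?C = "(1 / sqrt (2 * pi * sigma2)) ^ n * exp (- ((\<Sum>r<n. (y r)\<^sup>2) - real n * (\<Sum>q\<in>blk_idx p k. (theta_LS n G y (fst q) (snd q))\<^sup>2)) / (2 * sigma2))"
  have M: "(\<integral>th. lik n G p k sigma2 y th \<partial>prior_theta p k lam)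
     = ?C * (\<Prod>q\<in>blk_idx p k. sqrt (a / (a + lam (fst q))) * exp (- (t q)\<^sup>2 / (2 * (a + lam (fst q)))))"
    unfolding a_def t_def by (rule marginal[OF n_pos orth s2 lam])
  have P: "(\<Prod>q\<in>blk_idx p k. sqrt (a / (a + lam (fst q))) * exp (- (t q)\<^sup>2 / (2 * (a + lam (fst q)))))
      = (\<Prod>i<p. \<Prod>j<k i. sqrt (a / (a + lam i)) * exp (- (theta_LS n G y i j)\<^sup>2 / (2 * (a + lam i))))"
    unfolding blk_idx_def t_def by (subst prod.Sigma) (auto simp: case_prod_beta)
  have Q: "(\<Prod>j<k i. sqrt (a / (a + lam i)) * exp (- (theta_LS n G y i j)\<^sup>2 / (2 * (a + lam i))))
      = sqrt (a / (a + lam i)) ^ k i * exp (- normsq_LS n G k y i / (2 * (a + lam i)))" for i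
  proof -
    have "(\<Prod>j<k i. sqrt (a / (a + lam i)) * exp (- (theta_LS n G y i j)\<^sup>2 / (2 * (a + lam i))))
        = sqrt (a / (a + lam i)) ^ k i * (\<Prod>j<k i. exp (- (theta_LS n G y i j)\<^sup>2 / (2 * (a + lam i))))"
      by (rule trans[OF prod.distrib]) simp
    also have "(\<Prod>j<k i. exp (- (theta_LS n G y i j)\<^sup>2 / (2 * (a + lam i)))) = exp (\<Sum>j<k i. - (theta_LS n G y i j)\<^sup>2 / (2 * (a + lam i)))"
      by (rule exp_sum[symmetric]) simp
    also have "(\<Sum>j<k i. - (theta_LS n G y i j)\<^sup>2 / (2 * (a + lam i))) = - normsq_LS n G k y i / (2 * (a + lam i))"
      unfolding normsq_LS_def by (simp add: sum_divide_distrib sum_negf)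
    finally show ?thesis .
  qed
  have "post_obj n G p k sigma2 gamma y lam = ?C * (\<Prod>i<p. sqrt (a / (a + lam i)) ^ k i * exp (- normsq_LS n G k y i / (2 * (a + lam i))))
       * (\<Prod>i<p. exponential_density gamma (lam i))"
    unfolding post_obj_def M P Q ..
  also have "\<dots> = ?C * (\<Prod>i<p. Ff a gamma (k i) (normsq_LS n G k y i) (lam i))"
    unfolding Ff_def by (simp add: prod.distrib mult.assoc)
  finally show ?thesis unfolding a_def .
qed

lemma opt_H:
  fixes a g K S :: real
  assumes a: "0 < a" and g: "0 < g" and K: "0 < K" and S: "0 \<le> S"
  defines "H \<equiv> (\<lambda>x. - (K / 2) * ln (a + x) - (S / 2) * inverse (a + x) - g * x)"
  defines "lh \<equiv> max 0 (1 / (4 * g) * (sqrt (K\<^sup>2 + 8 * g * S) - (K + 4 * a * g)))"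
  assumes l: "0 \<le> l" "l \<noteq> lh"
  shows "H l < H lh"
proof -
  define D where "D = sqrt (K\<^sup>2 + 8 * g * S)"
  have D0: "0 \<le> D" unfolding D_def using g S by simp
  have D2: "D\<^sup>2 = K\<^sup>2 + 8 * g * S" unfolding D_def using g S by simp
  have DK: "K \<le> D" unfolding D_def using g S K by (simp add: real_le_rsqrt)
  define us where "us = (D - K) / (4 * g)"
  have us0: "0 \<le> us" unfolding us_def using DK g by simp
  have usS: "2 * g * us\<^sup>2 + K * us = S"
  proof -
    have "2 * g * us\<^sup>2 + K * us = ((D - K)\<^sup>2 + 2 * K * (D - K)) / (8 * g)"
      unfolding us_def using g by (simp add: field_simps power2_eq_square)
    also have "(D - K)\<^sup>2 + 2 * K * (D - K) = D\<^sup>2 - K\<^sup>2" by (simp add: power2_eq_square algebra_simps)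
    finally show ?thesis using D2 g by simp
  qed
  have lh: "lh = max 0 (us - a)"
    unfolding lh_def D_def[symmetric] us_def using g by (simp add: field_simps)
  have lh0: "0 \<le> lh" unfolding lh by simp
  define q where "q = (\<lambda>u. S - K * u - 2 * g * u\<^sup>2)"
  have qf: "q u = - (u - us) * (K + 2 * g * (u + us))" for u
    unfolding q_def using usS by (simp add: power2_eq_square algebra_simps)
  have dH: "(H has_real_derivative q (a + x) / (2 * (a + x)\<^sup>2)) (at x)" if "0 < a + x" for x
  proof -
    have ne: "a + x \<noteq> 0" using that by simp
    have dax: "((\<lambda>x. a + x) has_real_derivative 1) (at x)"
      using DERIV_add[OF DERIV_const[of a] DERIV_ident] by simp
    have d1: "((\<lambda>x. ln (a + x)) has_real_derivative inverse (a + x) * 1) (at x)"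
      by (rule DERIV_chain2[OF DERIV_ln[OF that] dax])
    have d2: "((\<lambda>x. inverse (a + x)) has_real_derivative - (inverse (a + x) * 1 * inverse (a + x))) (at x)"
      by (rule DERIV_inverse'[OF dax ne])
    have d: "(H has_real_derivative (- (K / 2) * (inverse (a + x) * 1) - (S / 2) * (- (inverse (a + x) * 1 * inverse (a + x))) - g * 1)) (at x)"
      unfolding H_def by (intro DERIV_diff DERIV_cmult d1 d2 DERIV_ident)
    have e: "- (K / 2) * (inverse u * 1) - (S / 2) * (- (inverse u * 1 * inverse u)) - g * 1 = (S - K * u - 2 * g * u\<^sup>2) / (2 * u\<^sup>2)"
      if "u \<noteq> 0" for u :: real
      using that by (simp add: inverse_eq_divide field_simps power2_eq_square)
    have eq: "- (K / 2) * (inverse (a + x) * 1) - (S / 2) * (- (inverse (a + x) * 1 * inverse (a + x))) - g * 1 = q (a + x) / (2 * (a + x)\<^sup>2)"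
      unfolding q_def by (rule e[OF ne])
    show ?thesis using d[unfolded eq] .
  qed
  have cont: "continuous_on {x0..x1} H" if "0 \<le> x0" for x0 x1
  proof (rule continuous_at_imp_continuous_on, intro ballI)
    fix x assume "x \<in> {x0..x1}"
    then have "0 < a + x" using that a by auto
    then show "isCont H x" using dH by (blast intro: DERIV_isCont)
  qed
  show ?thesis
  proof (cases "lh < l")
    case True
    have "H l < H lh"
    proof (rule DERIV_neg_imp_decreasing_open[OF True _ cont[OF lh0]])
      fix x assume x: "lh < x" "x < l"
      have ax: "0 < a + x" using x lh0 a by simp
      have "us < a + x" using x lh by simp
      then have "q (a + x) < 0" unfolding qf using K g us0 ax
        by (intro mult_neg_pos) (auto intro!: add_pos_nonneg)
      then have "q (a + x) / (2 * (a + x)\<^sup>2) < 0" using ax by (simp add: divide_neg_pos)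
      then show "\<exists>y. (H has_real_derivative y) (at x) \<and> y < 0" using dH[OF ax] by blast
    qed
    then show ?thesis .
  next
    case False
    then have ll: "l < lh" using l by simp
    then have lhp: "lh = us - a" unfolding lh using l by (simp add: max_def split: if_splits)
    show ?thesis
    proof (rule DERIV_pos_imp_increasing_open[OF ll _ cont[OF l(1)]])
      fix x assume x: "l < x" "x < lh"
      have ax: "0 < a + x" using x l a by simp
      have "a + x < us" using x lhp by simp
      then have "0 < q (a + x)" unfolding qf using K g us0 ax
        by (intro mult_pos_pos) (auto intro!: add_pos_nonneg)
      then have "0 < q (a + x) / (2 * (a + x)\<^sup>2)" using ax by simp
      then show "\<exists>y. (H has_real_derivative y) (at x) \<and> 0 < y" using dH[OF ax] by blast
    qed
  qed
qed

lemma Ff_exp: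
  fixes a g S l :: real and K :: nat
  assumes a: "0 < a" and g: "0 < g" and l: "0 \<le> l"
  shows "Ff a g K S l = exp ((real K / 2) * ln a + ln g + (- (real K / 2) * ln (a + l) - (S / 2) * inverse (a + l) - g * l))"
proof -
  have al: "0 < a + l" using a l by simp
  have x0: "0 < sqrt (a / (a + l))" using a al by simp
  have p1: "sqrt (a / (a + l)) ^ K = exp (real K * ((ln a - ln (a + l)) / 2))"
  proof -
    have "sqrt (a / (a + l)) ^ K = exp (ln (sqrt (a / (a + l)) ^ K))" using x0 by simp
    also have "ln (sqrt (a / (a + l)) ^ K) = real K * ln (sqrt (a / (a + l)))" using x0 by (simp add: ln_realpow)
    also have "ln (sqrt (a / (a + l))) = (ln a - ln (a + l)) / 2" using a al by (simp add: ln_sqrt ln_div)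
    finally show ?thesis .
  qed
  have p2: "exponential_density g l = exp (ln g) * exp (- l * g)" using g l by (simp add: exponential_density_def)
  have "Ff a g K S l = exp (real K * ((ln a - ln (a + l)) / 2)) * exp (- S / (2 * (a + l))) * (exp (ln g) * exp (- l * g))"
    unfolding Ff_def p1 p2 ..
  also have "\<dots> = exp (real K * ((ln a - ln (a + l)) / 2) + - S / (2 * (a + l)) + ln g + - l * g)"
    by (simp only: exp_add mult.assoc)
  also have "real K * ((ln a - ln (a + l)) / 2) + - S / (2 * (a + l)) + ln g + - l * g
      = (real K / 2) * ln a + ln g + (- (real K / 2) * ln (a + l) - (S / 2) * inverse (a + l) - g * l)"
    using al by (simp add: field_simps)
  finally show ?thesis .
qed

lemma opt_F:
  fixes a g S l :: real and K :: nat
  assumes a: "0 < a" and g: "0 < g" and K: "0 < K" and S: "0 \<le> S" and l: "0 \<le> l"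
  defines "lh \<equiv> max 0 (1 / (4 * g) * (sqrt ((real K)\<^sup>2 + 8 * g * S) - (real K + 4 * a * g)))"
  shows "Ff a g K S l \<le> Ff a g K S lh" "l \<noteq> lh \<Longrightarrow> Ff a g K S l < Ff a g K S lh"
proof -
  have lh0: "0 \<le> lh" unfolding lh_def by simp
  let ?H = "\<lambda>x. - (real K / 2) * ln (a + x) - (S / 2) * inverse (a + x) - g * x"
  have Kr: "0 < real K" using K by simp
  have strict: "?H l < ?H lh" if "l \<noteq> lh"
    using opt_H[OF a g Kr S l that[unfolded lh_def]] unfolding lh_def .
  show "l \<noteq> lh \<Longrightarrow> Ff a g K S l < Ff a g K S lh"
    unfolding Ff_exp[OF a g l] Ff_exp[OF a g lh0] using strict by simp
  show "Ff a g K S l \<le> Ff a g K S lh"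
  proof (cases "l = lh")
    case True then show ?thesis by simp
  next
    case False
    then show ?thesis unfolding Ff_exp[OF a g l] Ff_exp[OF a g lh0] using strict by simp
  qed
qed

lemma Ff_pos: "0 < a \<Longrightarrow> 0 < g \<Longrightarrow> 0 \<le> l \<Longrightarrow> 0 < Ff a g K S l"
  using Ff_exp by simp

lemma part1:
  fixes n p :: nat and k :: "nat \<Rightarrow> nat" and G :: "nat \<Rightarrow> nat \<Rightarrow> nat \<Rightarrow> real"
    and sigma2 :: real
  assumes n_pos: "0 < n"
    and k_pos: "\<forall>i<p. 0 < k i"
    and orth: "\<forall>i<p. \<forall>i'<p. \<forall>j<k i. \<forall>j'<k i'.
                 (\<Sum>r<n. G i r j * G i' r j') = (if i = i' \<and> j = j' then real n else 0)"
    and sigma2_pos: "0 < sigma2"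
  shows "\<forall>gamma>0. \<forall>y. argmax_post n G p k sigma2 gamma y = {lamhat n G p k sigma2 gamma y}"
proof (intro allI impI)
  fix gamma :: real and y :: "nat \<Rightarrow> real" assume gp: "0 < gamma"
  define a where "a = sigma2 / real n"
  have a0: "0 < a" unfolding a_def using n_pos sigma2_pos by simp
  define C where "C = (1 / sqrt (2 * pi * sigma2)) ^ n * exp (- ((\<Sum>r<n. (y r)\<^sup>2) - real n * (\<Sum>q\<in>blk_idx p k. (theta_LS n G y (fst q) (snd q))\<^sup>2)) / (2 * sigma2))"
  have C0: "0 < C" unfolding C_def using sigma2_pos by simp
  define f where "f = (\<lambda>i l. Ff a gamma (k i) (normsq_LS n G k y i) l)"
  define P where "P = post_obj n G p k sigma2 gamma y"
  define lh where "lh = lamhat n G p k sigma2 gamma y"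
  have Pf: "P l = C * (\<Prod>i<p. f i (l i))" if "l \<in> nonneg_params p" for l
    unfolding P_def C_def f_def a_def
    by (rule post_factor[OF n_pos orth sigma2_pos]) (use that in \<open>simp add: nonneg_params_def\<close>)
  have lh_np: "lh \<in> nonneg_params p" unfolding lh_def nonneg_params_def lamhat_def by simp
  have S0: "0 \<le> normsq_LS n G k y i" for i unfolding normsq_LS_def by (simp add: sum_nonneg)
  have lhi: "lh i = max 0 (1 / (4 * gamma) * (sqrt ((real (k i))\<^sup>2 + 8 * gamma * normsq_LS n G k y i) - (real (k i) + 4 * a * gamma)))"
    if "i < p" for i
    unfolding lh_def lamhat_def a_def using that by simp
  have opt1: "f i l \<le> f i (lh i)" if "i < p" "0 \<le> l" for i l
    unfolding f_def lhi[OF that(1)] using k_pos that by (intro opt_F(1)[OF a0 gp _ S0]) auto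
  have opt2: "f i l < f i (lh i)" if "i < p" "0 \<le> l" "l \<noteq> lh i" for i l
    unfolding f_def using opt_F(2)[OF a0 gp _ S0 that(2)] k_pos that lhi[OF that(1)] by auto
  have fpos: "0 < f i l" if "0 \<le> l" for i l unfolding f_def by (rule Ff_pos[OF a0 gp that])
  have lh0: "0 \<le> lh i" for i unfolding lh_def lamhat_def by simp
  have le: "P l \<le> P lh" if l: "l \<in> nonneg_params p" for l
  proof -
    have "(\<Prod>i<p. f i (l i)) \<le> (\<Prod>i<p. f i (lh i))"
      using l fpos opt1 by (intro prod_mono) (auto simp: nonneg_params_def less_imp_le)
    then show ?thesis unfolding Pf[OF l] Pf[OF lh_np] using C0 by simp
  qed
  have uniq: "l = lh" if l: "l \<in> nonneg_params p" and m: "P lh \<le> P l" for l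
  proof (rule ccontr)
    assume ne: "l \<noteq> lh"
    have "\<exists>i0<p. l i0 \<noteq> lh i0"
    proof (rule ccontr)
      assume "\<not> (\<exists>i0<p. l i0 \<noteq> lh i0)"
      then have "l i = lh i" for i
        using l lh_np by (cases "i < p") (auto simp: nonneg_params_def)
      then show False using ne by auto
    qed
    then obtain i0 where i0: "i0 < p" "l i0 \<noteq> lh i0" by blast
    have l0: "0 \<le> l i" if "i < p" for i using l that by (simp add: nonneg_params_def)
    let ?A = "{..<p} - {i0}"
    have Pl: "(\<Prod>i<p. f i (l i)) = f i0 (l i0) * (\<Prod>i\<in>?A. f i (l i))"
      using i0 by (simp add: prod.remove)
    have Plh: "(\<Prod>i<p. f i (lh i)) = f i0 (lh i0) * (\<Prod>i\<in>?A. f i (lh i))"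
      using i0 by (simp add: prod.remove)
    have rest: "(\<Prod>i\<in>?A. f i (l i)) \<le> (\<Prod>i\<in>?A. f i (lh i))"
      using l0 fpos opt1 by (intro prod_mono) (auto simp: less_imp_le)
    have restpos: "0 < (\<Prod>i\<in>?A. f i (l i))"
      using l0 fpos by (intro prod_pos) auto
    have "f i0 (l i0) * (\<Prod>i\<in>?A. f i (l i)) < f i0 (lh i0) * (\<Prod>i\<in>?A. f i (l i))"
      using opt2[OF i0(1) l0[OF i0(1)] i0(2)] restpos by simp
    also have "\<dots> \<le> f i0 (lh i0) * (\<Prod>i\<in>?A. f i (lh i))"
      using rest fpos[OF lh0] by (intro mult_left_mono) (auto simp: less_imp_le)
    finally have "(\<Prod>i<p. f i (l i)) < (\<Prod>i<p. f i (lh i))" unfolding Pl Plh .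
    then have "P l < P lh" unfolding Pf[OF l] Pf[OF lh_np] using C0 by simp
    then show False using m by simp
  qed
  show "argmax_post n G p k sigma2 gamma y = {lamhat n G p k sigma2 gamma y}"
  proof
    show "argmax_post n G p k sigma2 gamma y \<subseteq> {lamhat n G p k sigma2 gamma y}"
    proof
      fix l assume "l \<in> argmax_post n G p k sigma2 gamma y"
      then have l: "l \<in> nonneg_params p" and m: "\<forall>l'\<in>nonneg_params p. P l' \<le> P l"
        unfolding argmax_post_def P_def by auto
      have "l = lh" using uniq[OF l] m lh_np by blast
      then show "l \<in> {lamhat n G p k sigma2 gamma y}" unfolding lh_def by simp
    qed
    show "{lamhat n G p k sigma2 gamma y} \<subseteq> argmax_post n G p k sigma2 gamma y"
      using lh_np le unfolding argmax_post_def P_def lh_def by auto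
  qed
qed

theorem proposition9:
  fixes n p :: nat and k :: "nat \<Rightarrow> nat" and G :: "nat \<Rightarrow> nat \<Rightarrow> nat \<Rightarrow> real"
    and sigma2 :: real
  assumes n_pos: "0 < n"
    and k_pos: "\<forall>i<p. 0 < k i"
    and orth: "\<forall>i<p. \<forall>i'<p. \<forall>j<k i. \<forall>j'<k i'.
                 (\<Sum>r<n. G i r j * G i' r j') = (if i = i' \<and> j = j' then real n else 0)"
    and sigma2_pos: "0 < sigma2"
  shows "(\<forall>gamma>0. \<forall>y. argmax_post n G p k sigma2 gamma y = {lamhat n G p k sigma2 gamma y})
       \<and> (\<forall>y. \<forall>i<p. ((\<lambda>gamma. lamhat n G p k sigma2 gamma y i) \<longlongrightarrow>
              max 0 (normsq_LS n G k y i / real (k i) - sigma2 / real n)) (at_right 0))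
       \<and> (\<forall>gamma>0. \<forall>thbar. \<forall>i<p.
            measure (y_given_theta n G p k sigma2 thbar)
              {y \<in> space (y_given_theta n G p k sigma2 thbar). lamhat n G p k sigma2 gamma y i = 0}
            = measure (nc_chi2 (k i) ((\<Sum>j<k i. (thbar (i,j))\<^sup>2) * real n / sigma2))
                {..real (k i) + 2 * gamma * sigma2 / real n})"
  using part1[OF n_pos k_pos orth sigma2_pos] part2[OF n_pos k_pos] part3[OF n_pos k_pos orth sigma2_pos]
  by blast

end
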